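(* Suppose the null hypothesis $H_0: X\perp Y\mid Z$ holds. Assume that $T(\mathbf y,\mathbf a,g(\mathbf Z),h(\mathbf Z))$ has a continuous distribution conditional on $(\mathbf y,g(\mathbf Z),h(\mathbf Z))$ when $\mathbf a\sim\rho^{\star n}(\cdot\mid g(\mathbf Z),h(\mathbf Z))$ is independent of $\mathbf x$ given $(\mathbf y,\mathbf Z)$, and a continuous distribution conditional on $(\mathbf y,\mathbf Z)$ when $\mathbf a$ is drawn from the conditional distribution $f_{\mathbf x\mid\mathbf Z}(\cdot\mid\mathbf Z)$ of $\mathbf x$ given $\mathbf Z$ independently of $\mathbf x$ given $(\mathbf y,\mathbf Z)$. Then for any integer $M\ge1$ and any $\alpha\in(0,1)$, the Maxway CRT $p$-value satisfies $$\mathbb P(p_{\mathrm{maxway}}(\mathbf D)\le\alpha)\le \alpha+2\,\mathbb E[\Delta_x\Delta_y]+\mathbb E[\Delta_{x|g,h}],$$ where $\Delta_x=d_{\mathrm{TV}}\big(\rho^{\star n}(\cdot\mid g(\mathbf Z),h(\mathbf Z)),\,f_{\mathbf x\mid\mathbf Z}(\cdot\mid\mathbf Z)\big)$, $\Delta_y=d_{\mathrm{TV}}\big(f_{\mathbf y\mid\mathbf Z}(\cdot\mid\mathbf Z),\,f_{\mathbf y\mid g(\mathbf Z),h(\mathbf Z)}(\cdot\mid g(\mathbf Z),h(\mathbf Z))\big)$, $\Delta_{x|g,h}=d_{\mathrm{TV}}\big(\rho^{\star n}(\cdot\mid g(\mathbf Z),h(\mathbf Z)),\,\rho^{n}(\cdot\mid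 g(\mathbf Z),h(\mathbf Z))\big)$, and $f_{\mathbf y\mid\mathbf Z}$, $f_{\mathbf y\mid g(\mathbf Z),h(\mathbf Z)}$ denote the conditional distributions of $\mathbf y$ given $\mathbf Z$ and given $(g(\mathbf Z),h(\mathbf Z))$ respectively.
   Context: Let $(Y_i,X_i,Z_i)$, $i=1,\dots,n$, be i.i.d. copies of a random triple $(Y,X,Z)$ with $Y,X\in\mathbb R$, $Z\in\mathbb R^p$; write $\mathbf y=(Y_1,\dots,Y_n)^\top$, $\mathbf x=(X_1,\dots,X_n)^\top$, $\mathbf Z$ the $n\times p$ matrix with rows $Z_i^\top$, and $\mathbf D=(\mathbf y,\mathbf x,\mathbf Z)$. $g,h$ are fixed (non-random) measurable functions of $Z$ with values in finite-dimensional Euclidean spaces, $g(\mathbf Z)=(g(Z_1),\dots,g(Z_n))$, $h(\mathbf Z)=(h(Z_1),\dots,h(Z_n))$. $T(\mathbf y,\mathbf a,g(\mathbf Z),h(\mathbf Z))$ is a fixed measurable real-valued test statistic. $\rho^\star(\cdot\mid g(Z),h(Z))$ is the conditional distribution of $X$ given $(g(Z),h(Z))$ and $\rho^{\star n}(\mathbf x\mid g(\mathbf Z),h(\mathbf Z))=\prod_{i=1}^n\rho^\star(X_i\mid g(Z_i),h(Z_i))$. $\rho(\cdot\mid g(Z),h(Z))$ is a fixed conditional distribution (the "Maxway distribution", an estimate of $\rho^\star$ not depending on $\mathbf D$), and $\rho^{n}(\mathbf x\mid g(\mathbf Z),h(\mathbf Z))=\prod_{i=1}^n\rho(X_i\mid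 g(Z_i),h(Z_i))$. Maxway CRT: conditional on $\mathbf D$, draw $\mathbf x^{(1)},\dots,\mathbf x^{(M)}$ i.i.d. from $\rho^n(\cdot\mid g(\mathbf Z),h(\mathbf Z))$, and set $p_{\mathrm{maxway}}(\mathbf D)=\frac{1}{M+1}\big(1+\sum_{m=1}^M\mathbf 1\{T(\mathbf y,\mathbf x^{(m)},g(\mathbf Z),h(\mathbf Z))\ge T(\mathbf y,\mathbf x,g(\mathbf Z),h(\mathbf Z))\}\big)$. $d_{\mathrm{TV}}$ denotes total variation distance; expectations are over $\mathbf Z$ (and the data). *)

theory Defs
  imports "HOL-Probability.Probability"
begin

definition vec_law :: "nat \<Rightarrow> ('z \<Rightarrow> 'a measure) \<Rightarrow> (nat \<Rightarrow> 'z) \<Rightarrow> (nat \<Rightarrow> 'a) measure" where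
  "vec_law n K zs = PiM {..<n} (\<lambda>i. K (zs i))"

definition vec_space :: "nat \<Rightarrow> 'a measure \<Rightarrow> (nat \<Rightarrow> 'a) measure" where
  "vec_space n M = PiM {..<n} (\<lambda>_. M)"

definition vmap :: "nat \<Rightarrow> ('z \<Rightarrow> 'b) \<Rightarrow> (nat \<Rightarrow> 'z) \<Rightarrow> (nat \<Rightarrow> 'b)" where
  "vmap n g zs = (\<lambda>i\<in>{..<n}. g (zs i))"

definition dTV :: "'a measure \<Rightarrow> 'a measure \<Rightarrow> real" where
  "dTV P Q = (SUP A \<in> sets P. \<bar>measure P A - measure Q A\<bar>)"

text \<open>A probability law on the reals without atoms (continuous distribution).\<close>
definition atomless :: "real measure \<Rightarrow> bool" where
  "atomless P \<longleftrightarrow> (\<forall>t. measure P {t} = 0)"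

text \<open>Maxway CRT p-value: draws m (m < M) are the resampled vectors x^(m).\<close>
definition p_maxway ::
  "nat \<Rightarrow> ((nat \<Rightarrow> real) \<Rightarrow> (nat \<Rightarrow> real) \<Rightarrow> (nat \<Rightarrow> 'g) \<Rightarrow> (nat \<Rightarrow> 'h) \<Rightarrow> real)
   \<Rightarrow> (nat \<Rightarrow> real) \<Rightarrow> (nat \<Rightarrow> real) \<Rightarrow> (nat \<Rightarrow> 'g) \<Rightarrow> (nat \<Rightarrow> 'h)
   \<Rightarrow> (nat \<Rightarrow> nat \<Rightarrow> real) \<Rightarrow> real" where
  "p_maxway M T y x gZ hZ draws =
     (1 + real (card {m \<in> {..<M}. T y (draws m) gZ hZ \<ge> T y x gZ hZ})) / (real M + 1)"

end

theory Submission
  imports Defs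
begin


lemma measurable_PiM_kernel:
  assumes fin: "finite I" and L: "\<And>i. i \<in> I \<Longrightarrow> L i \<in> N \<rightarrow>\<^sub>M prob_algebra (B i)"
  shows "(\<lambda>w. PiM I (\<lambda>i. L i w)) \<in> N \<rightarrow>\<^sub>M prob_algebra (PiM I B)"
proof (rule measurable_prob_algebra_generated[OF sets_PiM Int_stable_prod_algebra prod_algebra_sets_into_space])
  fix a assume a: "a \<in> space N"
  have Li: "i \<in> I \<Longrightarrow> prob_space (L i a) \<and> sets (L i a) = sets (B i)" for i
    using measurable_space[OF L a] unfolding space_prob_algebra by blast
  show "prob_space (PiM I (\<lambda>i. L i a))"
    by (rule prob_space_PiM) (use Li in blast)
  show "sets (PiM I (\<lambda>i. L i a)) = sets (PiM I B)"
    by (rule sets_PiM_cong) (use Li in blast)+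
next
  fix A assume "A \<in> prod_algebra I B"
  then obtain X where A: "A = PiE I X" and X: "X \<in> (\<Pi> j\<in>I. sets (B j))"
    using prod_algebra_eq_finite[OF fin, of B] by blast
  have "(\<lambda>a. \<Prod>i\<in>I. emeasure (L i a) (X i)) \<in> borel_measurable N"
  proof (intro borel_measurable_prod_ennreal)
    fix i assume i: "i \<in> I"
    show "(\<lambda>a. emeasure (L i a) (X i)) \<in> borel_measurable N"
      apply (rule measurable_emeasure_kernel[OF measurable_prob_algebraD[OF L[OF i]]])
      using X i by blast
  qed
  moreover have "emeasure (PiM I (\<lambda>i. L i a)) A = (\<Prod>i\<in>I. emeasure (L i a) (X i))" if a: "a \<in> space N" for a
  proof -
    have Li: "i \<in> I \<Longrightarrow> prob_space (L i a) \<and> sets (L i a) = sets (B i)" for i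
      using measurable_space[OF L a] unfolding space_prob_algebra by blast
    have "emeasure (PiM I (\<lambda>i. L i a)) (prod_emb I (\<lambda>i. L i a) I (PiE I X)) = (\<Prod>i\<in>I. emeasure (L i a) (X i))"
      apply (rule emeasure_PiM_emb)
      using Li X fin by auto
    moreover have "prod_emb I (\<lambda>i. L i a) I (PiE I X) = PiE I X"
      apply (rule prod_emb_PiE_same_index)
      using Li X sets.sets_into_space by (metis PiE sets_eq_imp_space_eq)
    ultimately show ?thesis using A by simp
  qed
  ultimately show "(\<lambda>a. emeasure (PiM I (\<lambda>i. L i a)) A) \<in> borel_measurable N"
    by (rule measurable_cong[THEN iffD2, rotated])
qed



lemma dTV_upper:
  assumes P: "prob_space P" and Q: "prob_space Q" and A: "A \<in> sets P"
  shows "\<bar>measure P A - measure Q A\<bar> \<le> dTV P Q"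
  unfolding dTV_def
proof (rule cSUP_upper[OF A])
  show "bdd_above ((\<lambda>A. \<bar>measure P A - measure Q A\<bar>) ` sets P)"
  proof (rule bdd_aboveI2)
    fix B
    have "measure P B \<le> 1" "measure Q B \<le> 1" "0 \<le> measure P B" "0 \<le> measure Q B"
      using prob_space.prob_le_1[OF P, of B] prob_space.prob_le_1[OF Q, of B] by auto
    then show "\<bar>measure P B - measure Q B\<bar> \<le> 1" by linarith
  qed
qed

lemma dTV_nonneg:
  assumes P: "prob_space P" and Q: "prob_space Q"
  shows "0 \<le> dTV P Q"
  using dTV_upper[OF P Q sets.empty_sets] by simp

lemma dTV_sym:
  assumes "sets P = sets Q" shows "dTV P Q = dTV Q P"
  unfolding dTV_def assms by (simp add: abs_minus_commute)

lemma card_floor_set: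
  fixes k :: nat and v :: real
  assumes "0 \<le> v" "v \<le> real k"
  shows "{j\<in>{1..k}. real j \<le> v} = {1..nat \<lfloor>v\<rfloor>}"
proof -
  have e: "real j \<le> v \<longleftrightarrow> j \<le> nat \<lfloor>v\<rfloor>" for j
  proof -
    have "j \<le> nat \<lfloor>v\<rfloor> \<longleftrightarrow> int j \<le> \<lfloor>v\<rfloor>" using assms by (simp add: le_nat_iff)
    also have "\<dots> \<longleftrightarrow> real_of_int (int j) \<le> v" by (rule le_floor_iff)
    finally show ?thesis by simp
  qed
  have "\<lfloor>v\<rfloor> \<le> int k" using floor_mono[OF assms(2)] by simp
  then have "nat \<lfloor>v\<rfloor> \<le> k" by simp
  then show ?thesis unfolding e by auto
qed

lemma step_approx:
  fixes k :: nat and v :: real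
  assumes k: "k > 0" and v: "0 \<le> v" "v \<le> 1"
  defines "s \<equiv> (\<Sum>j\<in>{1..k}. if real j / real k \<le> v then 1 else 0) / real k"
  shows "s \<le> v \<and> v \<le> s + 1 / real k"
proof -
  have kv: "real j / real k \<le> v \<longleftrightarrow> real j \<le> real k * v" for j
    using k by (simp add: divide_le_eq mult.commute)
  have "(\<Sum>j\<in>{1..k}. if real j / real k \<le> v then 1 else (0::real)) = (\<Sum>j\<in>{j\<in>{1..k}. real j \<le> real k * v}. 1)"
    unfolding kv by (rule sum.inter_filter[symmetric]) simp
  also have "\<dots> = real (card {j\<in>{1..k}. real j \<le> real k * v})" by simp
  also have "{j\<in>{1..k}. real j \<le> real k * v} = {1..nat \<lfloor>real k * v\<rfloor>}"
    using v by (intro card_floor_set) (auto simp: mult_left_le)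
  finally have eq: "s = real (nat \<lfloor>real k * v\<rfloor>) / real k" unfolding s_def by simp
  have "real (nat \<lfloor>real k * v\<rfloor>) = of_int \<lfloor>real k * v\<rfloor>" using v by simp
  then have a: "real (nat \<lfloor>real k * v\<rfloor>) \<le> real k * v" "real k * v < real (nat \<lfloor>real k * v\<rfloor>) + 1"
    by linarith+
  show ?thesis unfolding eq using a k
    by (auto simp: field_simps)
qed



lemma tv_integral01:
  assumes P: "prob_space P" and Q: "prob_space Q" and sPQ: "sets P = sets Q"
    and f: "f \<in> borel_measurable P" and f01: "\<And>x. x \<in> space P \<Longrightarrow> 0 \<le> f x \<and> f x \<le> 1"
  shows "integral\<^sup>L P f - integral\<^sup>L Q f \<le> dTV P Q"
proof (rule field_le_epsilon)
  fix e :: real assume "0 < e"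
  then obtain K :: nat where k: "K > 0" "inverse (real K) < e" using ex_inverse_of_nat_less by blast
  have K: "K > 0" "1 / real K < e" using k by (auto simp: divide_inverse)
  interpret P: prob_space P by fact
  interpret Q: prob_space Q by fact
  have spQ: "space Q = space P" using sets_eq_imp_space_eq[OF sPQ] by simp
  have fQ: "f \<in> borel_measurable Q" using f measurable_cong_sets[OF sPQ refl] by blast
  define S where "S j = {x\<in>space P. real j / real K \<le> f x}" for j
  have S: "S j \<in> sets P" for j unfolding S_def using f by measurable
  have SQ: "S j \<in> sets Q" for j using S sPQ by simp
  define s where "s x = (\<Sum>j\<in>{1..K}. indicator (S j) x) / real K" for x
  have s_eq: "s x = (\<Sum>j\<in>{1..K}. if real j / real K \<le> f x then 1 else 0) / real K" if "x \<in> space P" for x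
    unfolding s_def S_def using that by (intro arg_cong2[where f="(/)"] sum.cong) (auto simp: indicator_def)
  have sb: "s x \<le> f x \<and> f x \<le> s x + 1 / real K" if "x \<in> space P" for x
    using step_approx[OF K(1), of "f x"] f01[OF that] s_eq[OF that] by simp
  have iP: "integrable P (indicator (S j) :: _ \<Rightarrow> real)" for j
    by (rule integrable_real_indicator[OF S]) (simp add: P.emeasure_finite less_top[symmetric])
  have iQ: "integrable Q (indicator (S j) :: _ \<Rightarrow> real)" for j
    by (rule integrable_real_indicator[OF SQ]) (simp add: Q.emeasure_finite less_top[symmetric])
  have sP: "integral\<^sup>L P s = (\<Sum>j\<in>{1..K}. measure P (S j)) / real K"
    unfolding s_def integral_divide_zero using Bochner_Integration.integral_sum[where I="{1..K}" and M=P and f="\<lambda>j. indicator (S j)", OF iP] S by simp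
  have sQ: "integral\<^sup>L Q s = (\<Sum>j\<in>{1..K}. measure Q (S j)) / real K"
    unfolding s_def integral_divide_zero using Bochner_Integration.integral_sum[where I="{1..K}" and M=Q and f="\<lambda>j. indicator (S j)", OF iQ] SQ by simp
  have intsP: "integrable P s" unfolding s_def by (intro integrable_divide Bochner_Integration.integrable_sum iP)
  have intsQ: "integrable Q s" unfolding s_def by (intro integrable_divide Bochner_Integration.integrable_sum iQ)
  have intfP: "integrable P f"
    using f01 by (intro P.integrable_const_bound[where B=1] AE_I2) (auto simp: f)
  have intfQ: "integrable Q f"
    using f01 spQ by (intro Q.integrable_const_bound[where B=1] AE_I2) (auto simp: fQ)
  have "integral\<^sup>L P f \<le> integral\<^sup>L P (\<lambda>x. s x + 1 / real K)"
    using sb by (intro integral_mono) (auto simp: intfP intsP)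
  also have "\<dots> = integral\<^sup>L P s + 1 / real K"
    using intsP by (simp add: P.prob_space)
  finally have i1: "integral\<^sup>L P f \<le> integral\<^sup>L P s + 1 / real K" .
  have i2: "integral\<^sup>L Q s \<le> integral\<^sup>L Q f"
    using sb spQ by (intro integral_mono) (auto simp: intfQ intsQ)
  have "(\<Sum>j\<in>{1..K}. measure P (S j) - measure Q (S j)) \<le> (\<Sum>j\<in>{1..K}. dTV P Q)"
  proof (intro sum_mono)
    fix j show "measure P (S j) - measure Q (S j) \<le> dTV P Q"
      using dTV_upper[OF P Q S, of j] by linarith
  qed
  then have "(\<Sum>j\<in>{1..K}. measure P (S j)) - (\<Sum>j\<in>{1..K}. measure Q (S j)) \<le> real K * dTV P Q"
    by (simp add: sum_subtractf)
  then have "integral\<^sup>L P s - integral\<^sup>L Q s \<le> dTV P Q"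
    unfolding sP sQ using K(1) by (simp add: diff_divide_distrib[symmetric] divide_le_eq mult.commute)
  then show "integral\<^sup>L P f - integral\<^sup>L Q f \<le> dTV P Q + e"
    using i1 i2 K(2) by linarith
qed

lemma tv_integral:
  assumes P: "prob_space P" and Q: "prob_space Q" and sPQ: "sets P = sets Q"
    and f: "f \<in> borel_measurable P" and fab: "\<And>x. x \<in> space P \<Longrightarrow> a \<le> f x \<and> f x \<le> b"
  shows "\<bar>integral\<^sup>L P f - integral\<^sup>L Q f\<bar> \<le> (b - a) * dTV P Q"
proof (cases "a < b")
  case True
  interpret P: prob_space P by fact
  interpret Q: prob_space Q by fact
  have spQ: "space Q = space P" using sets_eq_imp_space_eq[OF sPQ] by simp
  have fQ: "f \<in> borel_measurable Q" using f measurable_cong_sets[OF sPQ refl] by blast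
  define g where "g x = (f x - a) / (b - a)" for x
  have g: "g \<in> borel_measurable P" "g \<in> borel_measurable Q" unfolding g_def using f fQ by measurable
  have g01: "0 \<le> g x \<and> g x \<le> 1" if "x \<in> space P" for x
    using fab[OF that] True by (auto simp: g_def divide_le_eq)
  have fb: "x \<in> space P \<Longrightarrow> norm (f x) \<le> \<bar>a\<bar> + \<bar>b\<bar>" for x using fab[of x] by (simp add: abs_le_iff) linarith
  have intfP: "integrable P f"
    using fb by (intro P.integrable_const_bound[where B="\<bar>a\<bar> + \<bar>b\<bar>"] AE_I2) (auto simp: f)
  have intfQ: "integrable Q f"
    using fb spQ by (intro Q.integrable_const_bound[where B="\<bar>a\<bar> + \<bar>b\<bar>"] AE_I2) (auto simp: fQ)
  have gP: "integral\<^sup>L P g = (integral\<^sup>L P f - a) / (b - a)"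
    unfolding g_def using intfP by (simp add: P.prob_space)
  have gQ: "integral\<^sup>L Q g = (integral\<^sup>L Q f - a) / (b - a)"
    unfolding g_def using intfQ by (simp add: Q.prob_space)
  have 1: "integral\<^sup>L P g - integral\<^sup>L Q g \<le> dTV P Q"
    by (rule tv_integral01[OF P Q sPQ g(1) g01])
  have 2: "integral\<^sup>L Q g - integral\<^sup>L P g \<le> dTV Q P"
    by (rule tv_integral01[OF Q P sPQ[symmetric] g(2)]) (use g01 spQ in auto)
  have 3: "dTV Q P = dTV P Q" by (rule dTV_sym[OF sPQ[symmetric]])
  have "integral\<^sup>L P g - integral\<^sup>L Q g = (integral\<^sup>L P f - integral\<^sup>L Q f) / (b - a)"
    unfolding gP gQ using True by (simp add: diff_divide_distrib)
  then have "\<bar>integral\<^sup>L P f - integral\<^sup>L Q f\<bar> / (b - a) \<le> dTV P Q"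
    using 1 2 3 True by (simp add: abs_le_iff)
  then show ?thesis using True by (simp add: divide_le_eq mult.commute)
next
  case False
  interpret P: prob_space P by fact
  interpret Q: prob_space Q by fact
  have spQ: "space Q = space P" using sets_eq_imp_space_eq[OF sPQ] by simp
  have fa: "x \<in> space P \<Longrightarrow> f x = a" for x using fab[of x] False by linarith
  have "integral\<^sup>L P f = integral\<^sup>L P (\<lambda>_. a)" using fa
    by (intro Bochner_Integration.integral_cong) auto
  moreover have "integral\<^sup>L Q f = integral\<^sup>L Q (\<lambda>_. a)" using fa spQ
    by (intro Bochner_Integration.integral_cong) auto
  moreover obtain x where "x \<in> space P" using P.not_empty by blast
  then have "a \<le> b" using fab by fastforce
  ultimately show ?thesis using False dTV_nonneg[OF P Q] by (simp add: P.prob_space Q.prob_space)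
qed



lemma count_top:
  fixes t :: "nat \<Rightarrow> real"
  assumes I: "finite I" and c: "0 \<le> c"
  shows "real (card {j\<in>I. real (card {m\<in>I. t j \<le> t m}) \<le> c}) \<le> c"
proof (cases "{j\<in>I. real (card {m\<in>I. t j \<le> t m}) \<le> c} = {}")
  case True then show ?thesis using c by (simp only: card.empty of_nat_0)
next
  case False
  define S where "S = {j\<in>I. real (card {m\<in>I. t j \<le> t m}) \<le> c}"
  have fS: "finite S" using I by (simp add: S_def)
  have "Min (t ` S) \<in> t ` S" using False fS by (intro Min_in) (auto simp: S_def)
  then obtain j0 where j0: "j0 \<in> S" "t j0 = Min (t ` S)" by auto
  have "S \<subseteq> {m\<in>I. t j0 \<le> t m}"
  proof
    fix j assume "j \<in> S"
    then have "t j0 \<le> t j" using j0(2) fS by simp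
    then show "j \<in> {m\<in>I. t j0 \<le> t m}" using \<open>j \<in> S\<close> by (simp add: S_def)
  qed
  then have "card S \<le> card {m\<in>I. t j0 \<le> t m}" using I by (intro card_mono) auto
  also have "real (card {m\<in>I. t j0 \<le> t m}) \<le> c" using j0(1) by (simp add: S_def)
  finally show ?thesis unfolding S_def[symmetric] by linarith
qed

lemma card_as_sum:
  assumes "finite I"
  shows "real (card {m\<in>I. Q m}) = (\<Sum>m\<in>I. if Q m then 1 else 0)"
proof -
  have "(\<Sum>m\<in>I. if Q m then 1 else (0::real)) = (\<Sum>m\<in>{m\<in>I. Q m}. 1)"
    using assms by (rule sum.inter_filter[symmetric])
  then show ?thesis by simp
qed



lemma exch:
  fixes P :: "'v measure" and t :: "'v \<Rightarrow> real" and M :: nat and c :: real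
  assumes P: "prob_space P" and t[measurable]: "t \<in> borel_measurable P" and c: "0 \<le> c"
  shows "(\<integral>\<^sup>+x. \<integral>\<^sup>+d. indicator {d. 1 + real (card {m\<in>{..<M}. t x \<le> t (d m)}) \<le> c} d
            \<partial>PiM {..<M} (\<lambda>_. P) \<partial>P) \<le> ennreal (c / (real M + 1))"
proof -
  interpret P: prob_space P by fact
  define I where "I = {..M}"
  have I: "finite I" "M \<in> I" "I = insert M {..<M}" unfolding I_def by auto
  define W where "W = PiM I (\<lambda>_. P)"
  interpret W: prob_space W unfolding W_def by (rule prob_space_PiM) (rule P)
  interpret PM: prob_space "PiM {..<M} (\<lambda>_. P)" by (rule prob_space_PiM) (rule P)
  define g where "g j w = (if (\<Sum>m\<in>I. if t (w j) \<le> t (w m) then 1 else 0::real) \<le> c then 1 else 0::real)" for j w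
  have g01: "0 \<le> g j w" "g j w \<le> 1" for j w unfolding g_def by auto
  have gm: "(\<lambda>w. ennreal (g j w)) \<in> borel_measurable W" if j: "j \<in> I" for j
    unfolding g_def W_def using j I(1) by measurable
  have upd: "(\<lambda>(x, X). X(M := x)) \<in> P \<Otimes>\<^sub>M PiM {..<M} (\<lambda>_. P) \<rightarrow>\<^sub>M W"
    unfolding W_def I(3) by measurable
  have dW: "distr (P \<Otimes>\<^sub>M PiM {..<M} (\<lambda>_. P)) W (\<lambda>(x, X). X(M := x)) = W"
    unfolding W_def I(3) by (rule distr_pair_PiM_eq_PiM) (use P in auto)
  have F: "indicator {d. 1 + real (card {m\<in>{..<M}. t x \<le> t (d m)}) \<le> c} d = ennreal (g M (d(M := x)))" for x d
  proof -
    have "(\<Sum>m\<in>I. if t ((d(M := x)) M) \<le> t ((d(M := x)) m) then 1 else 0::real)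
        = 1 + (\<Sum>m\<in>{..<M}. if t x \<le> t (d m) then 1 else 0)"
      unfolding I(3) by (subst sum.insert) auto
    also have "(\<Sum>m\<in>{..<M}. if t x \<le> t (d m) then 1 else 0::real) = real (card {m\<in>{..<M}. t x \<le> t (d m)})"
      by (rule card_as_sum[symmetric]) simp
    finally show ?thesis unfolding g_def by (simp add: indicator_def)
  qed
  have LHS: "(\<integral>\<^sup>+x. \<integral>\<^sup>+d. indicator {d. 1 + real (card {m\<in>{..<M}. t x \<le> t (d m)}) \<le> c} d
            \<partial>PiM {..<M} (\<lambda>_. P) \<partial>P) = (\<integral>\<^sup>+w. ennreal (g M w) \<partial>W)"
  proof -
    have gmu: "(\<lambda>z. ennreal (g M ((\<lambda>(x, X). X(M := x)) z))) \<in> borel_measurable (P \<Otimes>\<^sub>M PiM {..<M} (\<lambda>_. P))"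
      by (rule measurable_compose[OF upd gm[OF I(2)]])
    have "(\<integral>\<^sup>+x. \<integral>\<^sup>+d. indicator {d. 1 + real (card {m\<in>{..<M}. t x \<le> t (d m)}) \<le> c} d
            \<partial>PiM {..<M} (\<lambda>_. P) \<partial>P) = (\<integral>\<^sup>+x. \<integral>\<^sup>+d. ennreal (g M ((\<lambda>(x, X). X(M := x)) (x, d)))
            \<partial>PiM {..<M} (\<lambda>_. P) \<partial>P)" unfolding F by simp
    also have "\<dots> = (\<integral>\<^sup>+z. ennreal (g M ((\<lambda>(x, X). X(M := x)) z)) \<partial>(P \<Otimes>\<^sub>M PiM {..<M} (\<lambda>_. P)))"
      by (rule PM.nn_integral_fst[OF gmu])
    also have "\<dots> = (\<integral>\<^sup>+w. ennreal (g M w) \<partial>distr (P \<Otimes>\<^sub>M PiM {..<M} (\<lambda>_. P)) W (\<lambda>(x, X). X(M := x)))"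
      by (rule nn_integral_distr[symmetric, OF upd]) (use gm[OF I(2)] in simp)
    finally show ?thesis unfolding dW .
  qed
  have sym: "(\<integral>\<^sup>+w. ennreal (g j w) \<partial>W) = (\<integral>\<^sup>+w. ennreal (g M w) \<partial>W)" if j: "j \<in> I" for j
  proof -
    define \<sigma> where "\<sigma> i = (if i = j then M else if i = M then j else i)" for i
    have bij: "bij_betw \<sigma> I I"
      by (rule bij_betw_byWitness[where f'=\<sigma>]) (use j I(2) in \<open>auto simp: \<sigma>_def\<close>)
    have inj: "inj_on \<sigma> I" and fn: "\<sigma> \<in> I \<rightarrow> I"
      using bij by (auto simp: bij_betw_def)
    define \<rho> where "\<rho> w = (\<lambda>n\<in>I. w (\<sigma> n))" for w :: "nat \<Rightarrow> 'v"
    have dr: "distr W W \<rho> = W"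
      using distr_PiM_reindex[of I "\<lambda>_. P" \<sigma> I, OF P inj fn] unfolding W_def \<rho>_def by simp
    have rm: "\<rho> \<in> W \<rightarrow>\<^sub>M W"
      unfolding W_def \<rho>_def using fn by measurable (use fn in blast)
    have "(\<integral>\<^sup>+w. ennreal (g M w) \<partial>W) = (\<integral>\<^sup>+w. ennreal (g M w) \<partial>distr W W \<rho>)" by (simp add: dr)
    also have "\<dots> = (\<integral>\<^sup>+w. ennreal (g M (\<rho> w)) \<partial>W)"
      by (rule nn_integral_distr[OF rm]) (use gm[OF I(2)] in simp)
    also have "\<dots> = (\<integral>\<^sup>+w. ennreal (g j w) \<partial>W)"
    proof (intro nn_integral_cong arg_cong[where f=ennreal])
      fix w
      have "(\<Sum>m\<in>I. if t (\<rho> w M) \<le> t (\<rho> w m) then 1 else 0::real)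
          = (\<Sum>m\<in>I. if t (w j) \<le> t (w (\<sigma> m)) then 1 else 0)"
        using I(2) by (intro sum.cong) (auto simp: \<rho>_def \<sigma>_def)
      also have "\<dots> = (\<Sum>m\<in>I. if t (w j) \<le> t (w m) then 1 else 0)"
        by (rule sum.reindex_bij_betw[OF bij, where g="\<lambda>m. if t (w j) \<le> t (w m) then 1 else 0"])
      finally show "g M (\<rho> w) = g j w" unfolding g_def by simp
    qed
    finally show ?thesis by simp
  qed
  have pw: "(\<Sum>j\<in>I. ennreal (g j w)) \<le> ennreal c" for w
  proof -
    have "(\<Sum>j\<in>I. g j w) = real (card {j\<in>I. real (card {m\<in>I. t (w j) \<le> t (w m)}) \<le> c})"
      unfolding g_def card_as_sum[OF I(1)] by simp
    also have "\<dots> \<le> c" by (rule count_top[OF I(1) c])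
    finally show ?thesis using g01 by (simp add: sum_ennreal ennreal_leI)
  qed
  have "(\<Sum>j\<in>I. (\<integral>\<^sup>+w. ennreal (g j w) \<partial>W)) = (\<integral>\<^sup>+w. (\<Sum>j\<in>I. ennreal (g j w)) \<partial>W)"
    by (rule nn_integral_sum[symmetric]) (rule gm)
  also have "\<dots> \<le> (\<integral>\<^sup>+w. ennreal c \<partial>W)" by (intro nn_integral_mono pw)
  also have "\<dots> = ennreal c" by (simp add: W.emeasure_space_1)
  finally have s: "(\<Sum>j\<in>I. (\<integral>\<^sup>+w. ennreal (g j w) \<partial>W)) \<le> ennreal c" .
  have "(\<Sum>j\<in>I. (\<integral>\<^sup>+w. ennreal (g j w) \<partial>W)) = of_nat (card I) * (\<integral>\<^sup>+w. ennreal (g M w) \<partial>W)"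
    using sym by simp
  also have "card I = Suc M" by (simp add: I_def)
  finally have s2: "of_nat (Suc M) * (\<integral>\<^sup>+w. ennreal (g M w) \<partial>W) \<le> ennreal c" using s by simp
  have "(\<integral>\<^sup>+w. ennreal (g M w) \<partial>W) \<le> (\<integral>\<^sup>+w. 1 \<partial>W)"
    using g01 by (intro nn_integral_mono) simp
  then have "(\<integral>\<^sup>+w. ennreal (g M w) \<partial>W) < \<infinity>" by (simp add: W.emeasure_space_1 le_less_trans[OF _ ennreal_one_less_top])
  then obtain r where r: "0 \<le> r" "(\<integral>\<^sup>+w. ennreal (g M w) \<partial>W) = ennreal r"
    by (cases "\<integral>\<^sup>+w. ennreal (g M w) \<partial>W") auto
  have "ennreal (real (Suc M) * r) \<le> ennreal c"
    using s2 r by (simp add: ennreal_of_nat_eq_real_of_nat ennreal_mult)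
  then have "real (Suc M) * r \<le> c" using c by simp
  then have "r \<le> c / (real M + 1)" by (simp add: field_simps)
  then show ?thesis unfolding LHS r(2) by (rule ennreal_leI)
qed



lemma emeasure_PiM_PiE:
  assumes fin: "finite I" and M: "\<And>i. i \<in> I \<Longrightarrow> prob_space (M i)"
    and A: "\<And>i. i \<in> I \<Longrightarrow> A i \<in> sets (M i)"
  shows "emeasure (PiM I M) (PiE I A) = (\<Prod>i\<in>I. emeasure (M i) (A i))"
proof -
  have "emeasure (PiM I M) (prod_emb I M I (PiE I A)) = (\<Prod>i\<in>I. emeasure (M i) (A i))"
    by (rule emeasure_PiM_emb) (use M A fin in auto)
  moreover have "prod_emb I M I (PiE I A) = PiE I A"
    by (rule prod_emb_PiE_same_index) (use A sets.sets_into_space in blast)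
  ultimately show ?thesis by simp
qed

lemma PiM_bind_pair:
  fixes \<mu> :: "'z measure" and U0 :: "'u measure" and X0 :: "'x measure" and I :: "'i set"
  assumes \<mu>: "prob_space \<mu>" and Kz[measurable]: "Kz \<in> \<mu> \<rightarrow>\<^sub>M prob_algebra X0"
    and gh[measurable]: "gh \<in> \<mu> \<rightarrow>\<^sub>M U0" and fin: "finite I"
    and F[measurable]: "(\<lambda>(u, x). F u x) \<in> borel_measurable (PiM I (\<lambda>_. U0) \<Otimes>\<^sub>M PiM I (\<lambda>_. X0))"
  shows "(\<integral>\<^sup>+zs. \<integral>\<^sup>+x. F (\<lambda>i\<in>I. gh (zs i)) x \<partial>PiM I (\<lambda>i. Kz (zs i)) \<partial>PiM I (\<lambda>_. \<mu>))
       = (\<integral>\<^sup>+w. F (\<lambda>i\<in>I. fst (w i)) (\<lambda>i\<in>I. snd (w i))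
            \<partial>PiM I (\<lambda>_. \<mu> \<bind> (\<lambda>z. distr (Kz z) (U0 \<Otimes>\<^sub>M X0) (\<lambda>x. (gh z, x)))))"
proof -
  interpret \<mu>: prob_space \<mu> by fact
  define Z where "Z = PiM I (\<lambda>_. \<mu>)"
  define XX where "XX = PiM I (\<lambda>_. X0)"
  define W where "W = PiM I (\<lambda>_. U0 \<Otimes>\<^sub>M X0)"
  define K where "K zs = PiM I (\<lambda>i. Kz (zs i))" for zs
  define T where "T zs (x :: 'i \<Rightarrow> 'x) = (\<lambda>i\<in>I. (gh (zs i), x i))" for zs x
  define N where "N zs = distr (K zs) W (T zs)" for zs
  define L where "L z = distr (Kz z) (U0 \<Otimes>\<^sub>M X0) (\<lambda>x. (gh z, x))" for z
  define J where "J = \<mu> \<bind> L"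
  define G where "G w = F (\<lambda>i\<in>I. fst (w i)) (\<lambda>i\<in>I. snd (w i))" for w
  interpret Z: prob_space Z unfolding Z_def by (rule prob_space_PiM) (rule \<mu>)
  have Kv: "K \<in> Z \<rightarrow>\<^sub>M prob_algebra XX"
    unfolding K_def Z_def XX_def
    by (rule measurable_PiM_kernel[OF fin]) measurable
  have Tm: "(\<lambda>(zs, x). T zs x) \<in> Z \<Otimes>\<^sub>M XX \<rightarrow>\<^sub>M W"
    unfolding T_def Z_def XX_def W_def by measurable
  have Nk: "N \<in> Z \<rightarrow>\<^sub>M prob_algebra W"
    unfolding N_def by (rule measurable_distr_prob_space2[OF Kv Tm])
  have Lk: "L \<in> \<mu> \<rightarrow>\<^sub>M prob_algebra (U0 \<Otimes>\<^sub>M X0)"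
    unfolding L_def by (rule measurable_distr_prob_space2[OF Kz]) measurable
  have Gm: "G \<in> borel_measurable W"
    unfolding G_def W_def by measurable
  have sK: "sets (K zs) = sets XX" if "zs \<in> space Z" for zs
    using measurable_space[OF Kv that] by (auto simp: space_prob_algebra)
  have spK: "space (K zs) = space XX" if "zs \<in> space Z" for zs
    by (rule sets_eq_imp_space_eq[OF sK[OF that]])
  have TK: "T zs \<in> K zs \<rightarrow>\<^sub>M W" if "zs \<in> space Z" for zs
    using measurable_compose_Pair1[OF that Tm] measurable_cong_sets[OF sK[OF that] refl, of W] by simp
  have inner: "(\<integral>\<^sup>+x. F (\<lambda>i\<in>I. gh (zs i)) x \<partial>K zs) = (\<integral>\<^sup>+w. G w \<partial>N zs)" if zs: "zs \<in> space Z" for zs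
  proof -
    have "(\<integral>\<^sup>+w. G w \<partial>N zs) = (\<integral>\<^sup>+x. G (T zs x) \<partial>K zs)"
      unfolding N_def by (rule nn_integral_distr[OF TK[OF zs]]) (use Gm in simp)
    also have "\<dots> = (\<integral>\<^sup>+x. F (\<lambda>i\<in>I. gh (zs i)) x \<partial>K zs)"
    proof (rule nn_integral_cong)
      fix x assume "x \<in> space (K zs)"
      then have "x \<in> PiE I (\<lambda>_. space X0)" using spK[OF zs] by (simp add: XX_def space_PiM)
      then have "(\<lambda>i\<in>I. x i) = x" by (simp add: PiE_restrict)
      then show "G (T zs x) = F (\<lambda>i\<in>I. gh (zs i)) x"
        unfolding G_def T_def by (simp cong: restrict_cong)
    qed
    finally show ?thesis by simp
  qed
  have LHS: "(\<integral>\<^sup>+zs. \<integral>\<^sup>+x. F (\<lambda>i\<in>I. gh (zs i)) x \<partial>K zs \<partial>Z) = (\<integral>\<^sup>+w. G w \<partial>(Z \<bind> N))"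
    by (subst nn_integral_bind[OF Gm measurable_prob_algebraD[OF Nk]])
       (auto intro!: nn_integral_cong simp: inner)
  have Zsp: "Z \<in> space (prob_algebra Z)" by (simp add: space_prob_algebra Z.prob_space_axioms)
  have \<mu>sp: "\<mu> \<in> space (prob_algebra \<mu>)" by (simp add: space_prob_algebra \<mu>)
  have probJ: "prob_space J" unfolding J_def by (rule prob_space_bind'[OF \<mu>sp Lk])
  have sJ: "sets J = sets (U0 \<Otimes>\<^sub>M X0)" unfolding J_def by (rule sets_bind'[OF \<mu>sp Lk])
  have probB: "prob_space (Z \<bind> N)" by (rule prob_space_bind'[OF Zsp Nk])
  have eqB: "Z \<bind> N = PiM I (\<lambda>_. J)"
  proof (rule measure_eqI_PiM_finite[OF fin])
    show "sets (Z \<bind> N) = sets (PiM I (\<lambda>_. J))"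
      unfolding sets_bind'[OF Zsp Nk] W_def by (rule sets_PiM_cong) (auto simp: sJ)
    show "sets (PiM I (\<lambda>_. J)) = sets (PiM I (\<lambda>_. J))" ..
  next
    fix A assume A: "\<And>i. i \<in> I \<Longrightarrow> A i \<in> sets J"
    then have A': "i \<in> I \<Longrightarrow> A i \<in> sets (U0 \<Otimes>\<^sub>M X0)" for i using sJ by simp
    define S where "S i z = Pair (gh z) -` A i \<inter> space X0" for i z
    have Sm: "(\<lambda>z. emeasure (Kz z) (S i z)) \<in> borel_measurable \<mu>" if i: "i \<in> I" for i
    proof (rule emeasure_measurable_subprob_algebra2[OF _ measurable_prob_algebraD[OF Kz]])
      have "(SIGMA z:space \<mu>. S i z) = (\<lambda>(z, x). (gh z, x)) -` A i \<inter> space (\<mu> \<Otimes>\<^sub>M X0)"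
        by (auto simp: S_def space_pair_measure)
      also have "\<dots> \<in> sets (\<mu> \<Otimes>\<^sub>M X0)" using A'[OF i] by measurable
      finally show "(SIGMA z:space \<mu>. S i z) \<in> sets (\<mu> \<Otimes>\<^sub>M X0)" .
    qed
    have JA: "emeasure J (A i) = (\<integral>\<^sup>+z. emeasure (Kz z) (S i z) \<partial>\<mu>)" if i: "i \<in> I" for i
    proof -
      have "emeasure J (A i) = (\<integral>\<^sup>+z. emeasure (L z) (A i) \<partial>\<mu>)"
        unfolding J_def by (rule emeasure_bind_prob_algebra[OF \<mu>sp Lk A'[OF i]])
      also have "\<dots> = (\<integral>\<^sup>+z. emeasure (Kz z) (S i z) \<partial>\<mu>)"
      proof (rule nn_integral_cong)
        fix z assume z: "z \<in> space \<mu>"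
        have sKz: "sets (Kz z) = sets X0" and spKz: "space (Kz z) = space X0"
          using measurable_space[OF Kz z] sets_eq_imp_space_eq[of "Kz z" X0] by (auto simp: space_prob_algebra)
        have pm: "(\<lambda>x. (gh z, x)) \<in> Kz z \<rightarrow>\<^sub>M U0 \<Otimes>\<^sub>M X0"
          using measurable_space[OF gh z] by (simp add: measurable_cong_sets[OF sKz refl])
        show "emeasure (L z) (A i) = emeasure (Kz z) (S i z)"
          unfolding L_def using A'[OF i] by (simp add: emeasure_distr[OF pm] spKz S_def vimage_def)
      qed
      finally show ?thesis .
    qed
    have "emeasure (Z \<bind> N) (PiE I A) = (\<integral>\<^sup>+zs. emeasure (N zs) (PiE I A) \<partial>Z)"
      by (rule emeasure_bind_prob_algebra[OF Zsp Nk]) (use A' in \<open>auto simp: W_def intro!: sets_PiM_I_finite fin\<close>)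
    also have "\<dots> = (\<integral>\<^sup>+zs. (\<Prod>i\<in>I. emeasure (Kz (zs i)) (S i (zs i))) \<partial>Z)"
    proof (rule nn_integral_cong)
      fix zs assume zs: "zs \<in> space Z"
      then have zsi: "i \<in> I \<Longrightarrow> zs i \<in> space \<mu>" for i by (auto simp: Z_def space_PiM)
      have sKi: "i \<in> I \<Longrightarrow> sets (Kz (zs i)) = sets X0" for i
        using measurable_space[OF Kz zsi] by (auto simp: space_prob_algebra)
      have pKi: "i \<in> I \<Longrightarrow> prob_space (Kz (zs i))" for i
        using measurable_space[OF Kz zsi] by (auto simp: space_prob_algebra)
      have "emeasure (N zs) (PiE I A) = emeasure (K zs) (T zs -` PiE I A \<inter> space (K zs))"
        unfolding N_def by (rule emeasure_distr[OF TK[OF zs]]) (use A' in \<open>auto simp: W_def intro!: sets_PiM_I_finite fin\<close>)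
      also have "T zs -` PiE I A \<inter> space (K zs) = PiE I (\<lambda>i. S i (zs i))"
        unfolding spK[OF zs] by (auto simp: T_def S_def XX_def space_PiM PiE_iff extensional_def)
      also have "emeasure (K zs) (PiE I (\<lambda>i. S i (zs i))) = (\<Prod>i\<in>I. emeasure (Kz (zs i)) (S i (zs i)))"
        unfolding K_def
      proof (rule emeasure_PiM_PiE[OF fin pKi])
        fix i assume i: "i \<in> I"
        have "S i (zs i) \<in> sets X0" unfolding S_def
          using sets_Pair1[OF A'[OF i], of "gh (zs i)"] by auto
        then show "S i (zs i) \<in> sets (Kz (zs i))" using sKi[OF i] by simp
      qed
      finally show "emeasure (N zs) (PiE I A) = (\<Prod>i\<in>I. emeasure (Kz (zs i)) (S i (zs i)))" .
    qed
    also have "\<dots> = (\<Prod>i\<in>I. (\<integral>\<^sup>+z. emeasure (Kz z) (S i z) \<partial>\<mu>))"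
    proof -
      interpret PS: product_sigma_finite "\<lambda>_::'i. \<mu>"
        by (simp add: product_sigma_finite_def \<mu>.sigma_finite_measure_axioms)
      show ?thesis unfolding Z_def
        by (rule PS.product_nn_integral_prod[OF fin, where f="\<lambda>i z. emeasure (Kz z) (S i z)"]) (rule Sm)
    qed
    also have "\<dots> = (\<Prod>i\<in>I. emeasure J (A i))" by (intro prod.cong refl JA[symmetric]) 
    also have "\<dots> = emeasure (PiM I (\<lambda>_. J)) (PiE I A)"
      by (rule emeasure_PiM_PiE[OF fin probJ A, symmetric])
    finally show "emeasure (Z \<bind> N) (PiE I A) = emeasure (PiM I (\<lambda>_. J)) (PiE I A)" .
  next
    show "range (\<lambda>_::nat. space (PiM I (\<lambda>_. J))) \<subseteq> prod_algebra I (\<lambda>_. J)"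
      using prod_algebra_eq_finite[OF fin, of "\<lambda>_. J"] by (auto simp: space_PiM)
    show "(\<Union>i::nat. space (PiM I (\<lambda>_. J))) = space (PiM I (\<lambda>_. J))" by simp
    show "emeasure (Z \<bind> N) (space (PiM I (\<lambda>_. J))) \<noteq> \<infinity>" for i :: nat
      using le_less_trans[OF prob_space.emeasure_le_1[OF probB] ennreal_one_less_top] by (simp add: less_top)
  qed
  have "(\<integral>\<^sup>+zs. \<integral>\<^sup>+x. F (\<lambda>i\<in>I. gh (zs i)) x \<partial>K zs \<partial>Z) = (\<integral>\<^sup>+w. G w \<partial>PiM I (\<lambda>_. J))"
    using LHS eqB by simp
  then show ?thesis
    unfolding Z_def K_def G_def J_def L_def by simp
qed



lemma bind_pair_eq:
  fixes \<mu> :: "'z measure" and U0 :: "'u measure" and X0 :: "'x measure"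
  assumes \<mu>: "prob_space \<mu>" and K1[measurable]: "K1 \<in> \<mu> \<rightarrow>\<^sub>M prob_algebra X0"
    and K2[measurable]: "K2 \<in> \<mu> \<rightarrow>\<^sub>M prob_algebra X0"
    and gh[measurable]: "gh \<in> \<mu> \<rightarrow>\<^sub>M U0"
    and cond: "\<And>A B. A \<in> sets X0 \<Longrightarrow> B \<in> sets U0 \<Longrightarrow>
       (\<integral>\<^sup>+z. indicator B (gh z) * emeasure (K1 z) A \<partial>\<mu>) = (\<integral>\<^sup>+z. indicator B (gh z) * emeasure (K2 z) A \<partial>\<mu>)"
  shows "\<mu> \<bind> (\<lambda>z. distr (K1 z) (U0 \<Otimes>\<^sub>M X0) (\<lambda>x. (gh z, x)))
       = \<mu> \<bind> (\<lambda>z. distr (K2 z) (U0 \<Otimes>\<^sub>M X0) (\<lambda>x. (gh z, x)))"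
proof -
  have \<mu>sp: "\<mu> \<in> space (prob_algebra \<mu>)" by (simp add: space_prob_algebra \<mu>)
  have Lk: "(\<lambda>z. distr (K z) (U0 \<Otimes>\<^sub>M X0) (\<lambda>x. (gh z, x))) \<in> \<mu> \<rightarrow>\<^sub>M prob_algebra (U0 \<Otimes>\<^sub>M X0)"
    if K: "K \<in> \<mu> \<rightarrow>\<^sub>M prob_algebra X0" for K
    by (rule measurable_distr_prob_space2[OF K]) measurable
  have val: "emeasure (\<mu> \<bind> (\<lambda>z. distr (K z) (U0 \<Otimes>\<^sub>M X0) (\<lambda>x. (gh z, x)))) (B \<times> A)
      = (\<integral>\<^sup>+z. indicator B (gh z) * emeasure (K z) A \<partial>\<mu>)"
    if K: "K \<in> \<mu> \<rightarrow>\<^sub>M prob_algebra X0" and A: "A \<in> sets X0" and B: "B \<in> sets U0" for K A B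
  proof -
    have "emeasure (\<mu> \<bind> (\<lambda>z. distr (K z) (U0 \<Otimes>\<^sub>M X0) (\<lambda>x. (gh z, x)))) (B \<times> A)
        = (\<integral>\<^sup>+z. emeasure (distr (K z) (U0 \<Otimes>\<^sub>M X0) (\<lambda>x. (gh z, x))) (B \<times> A) \<partial>\<mu>)"
      by (rule emeasure_bind_prob_algebra[OF \<mu>sp Lk[OF K]]) (use A B in simp)
    also have "\<dots> = (\<integral>\<^sup>+z. indicator B (gh z) * emeasure (K z) A \<partial>\<mu>)"
    proof (rule nn_integral_cong)
      fix z assume z: "z \<in> space \<mu>"
      have sKz: "sets (K z) = sets X0"
        using measurable_space[OF K z] by (auto simp: space_prob_algebra)
      have spKz: "space (K z) = space X0" by (rule sets_eq_imp_space_eq[OF sKz])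
      have pm: "(\<lambda>x. (gh z, x)) \<in> K z \<rightarrow>\<^sub>M U0 \<Otimes>\<^sub>M X0"
        using measurable_space[OF gh z] by (simp add: measurable_cong_sets[OF sKz refl])
      have "(\<lambda>x. (gh z, x)) -` (B \<times> A) \<inter> space (K z) = (if gh z \<in> B then A else {})"
        using sets.sets_into_space[OF A] spKz by auto
      then show "emeasure (distr (K z) (U0 \<Otimes>\<^sub>M X0) (\<lambda>x. (gh z, x))) (B \<times> A) = indicator B (gh z) * emeasure (K z) A"
        using A B by (simp add: emeasure_distr[OF pm])
    qed
    finally show ?thesis .
  qed
  show ?thesis
  proof (rule measure_eqI_generator_eq[OF Int_stable_pair_measure_generator[of U0 X0]])
    show "{a \<times> b |a b. a \<in> sets U0 \<and> b \<in> sets X0} \<subseteq> Pow (space U0 \<times> space X0)"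
      using sets.sets_into_space[of _ U0] sets.sets_into_space[of _ X0] by auto
    fix X assume "X \<in> {a \<times> b |a b. a \<in> sets U0 \<and> b \<in> sets X0}"
    then obtain B A where X: "X = B \<times> A" "B \<in> sets U0" "A \<in> sets X0" by blast
    show "emeasure (\<mu> \<bind> (\<lambda>z. distr (K1 z) (U0 \<Otimes>\<^sub>M X0) (\<lambda>x. (gh z, x)))) X
        = emeasure (\<mu> \<bind> (\<lambda>z. distr (K2 z) (U0 \<Otimes>\<^sub>M X0) (\<lambda>x. (gh z, x)))) X"
      unfolding X(1) val[OF K1 X(3,2)] val[OF K2 X(3,2)] by (rule cond[OF X(3,2)])
  next
    show "sets (\<mu> \<bind> (\<lambda>z. distr (K1 z) (U0 \<Otimes>\<^sub>M X0) (\<lambda>x. (gh z, x)))) = sigma_sets (space U0 \<times> space X0) {a \<times> b |a b. a \<in> sets U0 \<and> b \<in> sets X0}"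
      unfolding sets_bind'[OF \<mu>sp Lk[OF K1]] by (rule sets_pair_measure)
    show "sets (\<mu> \<bind> (\<lambda>z. distr (K2 z) (U0 \<Otimes>\<^sub>M X0) (\<lambda>x. (gh z, x)))) = sigma_sets (space U0 \<times> space X0) {a \<times> b |a b. a \<in> sets U0 \<and> b \<in> sets X0}"
      unfolding sets_bind'[OF \<mu>sp Lk[OF K2]] by (rule sets_pair_measure)
    show "range (\<lambda>_::nat. space U0 \<times> space X0) \<subseteq> {a \<times> b |a b. a \<in> sets U0 \<and> b \<in> sets X0}"
    proof -
      have "space U0 \<times> space X0 \<in> {a \<times> b |a b. a \<in> sets U0 \<and> b \<in> sets X0}"
        using sets.top[of U0] sets.top[of X0] by blast
      then show ?thesis by (simp add: image_subset_iff)
    qed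
    show "(\<Union>i::nat. space U0 \<times> space X0) = space U0 \<times> space X0" by simp
    have "prob_space (\<mu> \<bind> (\<lambda>z. distr (K1 z) (U0 \<Otimes>\<^sub>M X0) (\<lambda>x. (gh z, x))))"
      by (rule prob_space_bind'[OF \<mu>sp Lk[OF K1]])
    from le_less_trans[OF prob_space.emeasure_le_1[OF this] ennreal_one_less_top]
    show "emeasure (\<mu> \<bind> (\<lambda>z. distr (K1 z) (U0 \<Otimes>\<^sub>M X0) (\<lambda>x. (gh z, x)))) (space U0 \<times> space X0) \<noteq> \<infinity>" for i :: nat
      by (simp add: less_top)
  qed
qed

lemma avg:
  fixes \<mu> :: "'z measure" and U0 :: "'u measure" and X0 :: "'x measure" and I :: "'i set"
  assumes \<mu>: "prob_space \<mu>" and K1: "K1 \<in> \<mu> \<rightarrow>\<^sub>M prob_algebra X0"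
    and K2: "K2 \<in> \<mu> \<rightarrow>\<^sub>M prob_algebra X0"
    and gh: "gh \<in> \<mu> \<rightarrow>\<^sub>M U0"
    and cond: "\<And>A B. A \<in> sets X0 \<Longrightarrow> B \<in> sets U0 \<Longrightarrow>
       (\<integral>\<^sup>+z. indicator B (gh z) * emeasure (K1 z) A \<partial>\<mu>) = (\<integral>\<^sup>+z. indicator B (gh z) * emeasure (K2 z) A \<partial>\<mu>)"
    and fin: "finite I"
    and F: "(\<lambda>(u, x). F u x) \<in> borel_measurable (PiM I (\<lambda>_. U0) \<Otimes>\<^sub>M PiM I (\<lambda>_. X0))"
  shows "(\<integral>\<^sup>+zs. \<integral>\<^sup>+x. F (\<lambda>i\<in>I. gh (zs i)) x \<partial>PiM I (\<lambda>i. K1 (zs i)) \<partial>PiM I (\<lambda>_. \<mu>))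
       = (\<integral>\<^sup>+zs. \<integral>\<^sup>+x. F (\<lambda>i\<in>I. gh (zs i)) x \<partial>PiM I (\<lambda>i. K2 (zs i)) \<partial>PiM I (\<lambda>_. \<mu>))"
  unfolding PiM_bind_pair[OF \<mu> K1 gh fin F] PiM_bind_pair[OF \<mu> K2 gh fin F] by (rule arg_cong[where f="\<lambda>J. \<integral>\<^sup>+w. F (\<lambda>i\<in>I. fst (w i)) (\<lambda>i\<in>I. snd (w i)) \<partial>PiM I (\<lambda>_. J)"])
     (rule bind_pair_eq[OF \<mu> K1 K2 gh cond])



lemma integrable_bounded01:
  fixes f :: "'a \<Rightarrow> real"
  assumes P: "prob_space P" and f: "f \<in> borel_measurable P" and b: "\<And>x. x \<in> space P \<Longrightarrow> \<bar>f x\<bar> \<le> B"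
  shows "integrable P f"
proof -
  interpret P: prob_space P by fact
  show ?thesis using b by (intro P.integrable_const_bound[where B=B] AE_I2) (auto simp: f)
qed

lemma interaction:
  fixes \<phi> :: "'x \<Rightarrow> 'y \<Rightarrow> real"
  assumes P1: "prob_space P1" and P2: "prob_space P2" and sP1: "sets P1 = sets X" and sP2: "sets P2 = sets X"
    and Q1: "prob_space Q1" and Q2: "prob_space Q2" and sQ1: "sets Q1 = sets Y" and sQ2: "sets Q2 = sets Y"
    and \<phi>m: "(\<lambda>(x, y). \<phi> x y) \<in> borel_measurable (X \<Otimes>\<^sub>M Y)"
    and \<phi>01: "\<And>x y. 0 \<le> \<phi> x y \<and> \<phi> x y \<le> 1"
  shows "(\<integral>y. \<integral>x. \<phi> x y \<partial>P1 \<partial>Q1) + (\<integral>y. \<integral>x. \<phi> x y \<partial>P2 \<partial>Q2)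
       \<le> (\<integral>y. \<integral>x. \<phi> x y \<partial>P2 \<partial>Q1) + (\<integral>y. \<integral>x. \<phi> x y \<partial>P1 \<partial>Q2) + 2 * (dTV P2 P1 * dTV Q1 Q2)"
proof -
  interpret P1: prob_space P1 by fact
  interpret P2: prob_space P2 by fact
  have spP1: "space P1 = space X" and spP2: "space P2 = space X"
    using sets_eq_imp_space_eq[OF sP1] sets_eq_imp_space_eq[OF sP2] by auto
  have spQ1: "space Q1 = space Y" and spQ2: "space Q2 = space Y"
    using sets_eq_imp_space_eq[OF sQ1] sets_eq_imp_space_eq[OF sQ2] by auto
  have sw: "(\<lambda>(y, x). \<phi> x y) \<in> borel_measurable (Y \<Otimes>\<^sub>M X)"
    using measurable_compose[OF measurable_pair_swap' \<phi>m] by (simp add: case_prod_beta')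
  have m1: "(\<lambda>y. \<integral>x. \<phi> x y \<partial>P1) \<in> borel_measurable Y"
  proof (rule P1.borel_measurable_lebesgue_integral)
    have e: "sets (Y \<Otimes>\<^sub>M P1) = sets (Y \<Otimes>\<^sub>M X)" by (rule sets_pair_measure_cong) (simp_all add: sP1)
    then show "(\<lambda>(y, x). \<phi> x y) \<in> borel_measurable (Y \<Otimes>\<^sub>M P1)"
      by (subst measurable_cong_sets[OF e refl]) (rule sw)
  qed
  have m2: "(\<lambda>y. \<integral>x. \<phi> x y \<partial>P2) \<in> borel_measurable Y"
  proof (rule P2.borel_measurable_lebesgue_integral)
    have e: "sets (Y \<Otimes>\<^sub>M P2) = sets (Y \<Otimes>\<^sub>M X)" by (rule sets_pair_measure_cong) (simp_all add: sP2)
    then show "(\<lambda>(y, x). \<phi> x y) \<in> borel_measurable (Y \<Otimes>\<^sub>M P2)"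
      by (subst measurable_cong_sets[OF e refl]) (rule sw)
  qed
  have sec: "(\<lambda>x. \<phi> x y) \<in> borel_measurable X" if "y \<in> space Y" for y
    using measurable_compose[OF measurable_Pair2'[OF that] \<phi>m] by simp
  have b1: "0 \<le> (\<integral>x. \<phi> x y \<partial>P1) \<and> (\<integral>x. \<phi> x y \<partial>P1) \<le> 1" if y: "y \<in> space Y" for y
  proof -
    have "integrable P1 (\<lambda>x. \<phi> x y)"
      using sec[OF y] \<phi>01 by (intro integrable_bounded01[OF P1, where B=1]) (auto simp: measurable_cong_sets[OF sP1 refl])
    then show ?thesis using \<phi>01 by (auto intro!: integral_nonneg P1.integral_le_const)
  qed
  define G where "G y = (\<integral>x. \<phi> x y \<partial>P1) - (\<integral>x. \<phi> x y \<partial>P2)" for y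
  define \<Delta> where "\<Delta> = dTV P1 P2"
  have Gb: "-\<Delta> \<le> G y \<and> G y \<le> \<Delta>" if y: "y \<in> space Y" for y
  proof -
    have "\<bar>(\<integral>x. \<phi> x y \<partial>P1) - (\<integral>x. \<phi> x y \<partial>P2)\<bar> \<le> (1 - 0) * dTV P1 P2"
      by (rule tv_integral[OF P1 P2]) (use sP1 sP2 sec[OF y] \<phi>01 in \<open>auto simp: measurable_cong_sets[OF sP1 refl]\<close>)
    then show ?thesis unfolding G_def \<Delta>_def by (simp add: abs_le_iff)
  qed
  have Gm: "G \<in> borel_measurable Y" unfolding G_def using m1 m2 by measurable
  have Gm1: "G \<in> borel_measurable Q1" using Gm measurable_cong_sets[OF sQ1 refl] by blast
  have "\<bar>integral\<^sup>L Q1 G - integral\<^sup>L Q2 G\<bar> \<le> (\<Delta> - (-\<Delta>)) * dTV Q1 Q2"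
    by (rule tv_integral[OF Q1 Q2]) (use sQ1 sQ2 Gm1 Gb spQ1 in auto)
  moreover have "integral\<^sup>L Q G = (\<integral>y. \<integral>x. \<phi> x y \<partial>P1 \<partial>Q) - (\<integral>y. \<integral>x. \<phi> x y \<partial>P2 \<partial>Q)"
    if Q: "prob_space Q" "sets Q = sets Y" for Q
  proof -
    have "(\<lambda>y. \<integral>x. \<phi> x y \<partial>P1) \<in> borel_measurable Q" "(\<lambda>y. \<integral>x. \<phi> x y \<partial>P2) \<in> borel_measurable Q"
      using m1 m2 measurable_cong_sets[OF Q(2) refl] by blast+
    moreover have "0 \<le> (\<integral>x. \<phi> x y \<partial>P2) \<and> (\<integral>x. \<phi> x y \<partial>P2) \<le> 1" if y: "y \<in> space Y" for y
    proof -
      have "integrable P2 (\<lambda>x. \<phi> x y)"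
        using sec[OF y] \<phi>01 by (intro integrable_bounded01[OF P2, where B=1]) (auto simp: measurable_cong_sets[OF sP2 refl])
      then show ?thesis using \<phi>01 by (auto intro!: integral_nonneg P2.integral_le_const)
    qed
    moreover have "space Q = space Y" using sets_eq_imp_space_eq[OF Q(2)] .
    ultimately have "integrable Q (\<lambda>y. \<integral>x. \<phi> x y \<partial>P1)" "integrable Q (\<lambda>y. \<integral>x. \<phi> x y \<partial>P2)"
      using b1 by (auto intro!: integrable_bounded01[OF Q(1), where B=1])
    then show ?thesis unfolding G_def by simp
  qed
  ultimately have "\<bar>((\<integral>y. \<integral>x. \<phi> x y \<partial>P1 \<partial>Q1) - (\<integral>y. \<integral>x. \<phi> x y \<partial>P2 \<partial>Q1))
      - ((\<integral>y. \<integral>x. \<phi> x y \<partial>P1 \<partial>Q2) - (\<integral>y. \<integral>x. \<phi> x y \<partial>P2 \<partial>Q2))\<bar> \<le> 2 * \<Delta> * dTV Q1 Q2"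
    using Q1 Q2 sQ1 sQ2 by simp
  moreover have "\<Delta> = dTV P2 P1" unfolding \<Delta>_def by (rule dTV_sym) (simp add: sP1 sP2)
  ultimately show ?thesis by (simp add: abs_le_iff)
qed

lemma nn_real_iter:
  fixes \<phi> :: "'x \<Rightarrow> 'y \<Rightarrow> real"
  assumes P: "prob_space P" and Q: "prob_space Q"
    and \<phi>m: "(\<lambda>(x, y). \<phi> x y) \<in> borel_measurable (P \<Otimes>\<^sub>M Q)"
    and \<phi>01: "\<And>x y. 0 \<le> \<phi> x y \<and> \<phi> x y \<le> 1"
  shows "(\<integral>\<^sup>+x. \<integral>\<^sup>+y. ennreal (\<phi> x y) \<partial>Q \<partial>P) = ennreal (\<integral>x. \<integral>y. \<phi> x y \<partial>Q \<partial>P)"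
proof -
  interpret P: prob_space P by fact
  interpret Q: prob_space Q by fact
  have sec: "(\<lambda>y. \<phi> x y) \<in> borel_measurable Q" if "x \<in> space P" for x
    using measurable_compose[OF measurable_Pair1'[OF that] \<phi>m] by simp
  have inner: "(\<integral>\<^sup>+y. ennreal (\<phi> x y) \<partial>Q) = ennreal (\<integral>y. \<phi> x y \<partial>Q)" if "x \<in> space P" for x
    using \<phi>01 sec[OF that] by (intro nn_integral_eq_integral integrable_bounded01[OF Q, where B=1] AE_I2) auto
  have m: "(\<lambda>x. \<integral>y. \<phi> x y \<partial>Q) \<in> borel_measurable P"
    by (rule Q.borel_measurable_lebesgue_integral) (rule \<phi>m)
  have b: "0 \<le> (\<integral>y. \<phi> x y \<partial>Q) \<and> (\<integral>y. \<phi> x y \<partial>Q) \<le> 1" if x: "x \<in> space P" for x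
  proof -
    have "integrable Q (\<lambda>y. \<phi> x y)"
      using sec[OF x] \<phi>01 by (intro integrable_bounded01[OF Q, where B=1]) auto
    then show ?thesis using \<phi>01 by (auto intro!: integral_nonneg Q.integral_le_const)
  qed
  have "(\<integral>\<^sup>+x. \<integral>\<^sup>+y. ennreal (\<phi> x y) \<partial>Q \<partial>P) = (\<integral>\<^sup>+x. ennreal (\<integral>y. \<phi> x y \<partial>Q) \<partial>P)"
    by (rule nn_integral_cong) (rule inner)
  also have "\<dots> = ennreal (\<integral>x. \<integral>y. \<phi> x y \<partial>Q \<partial>P)"
    using b m by (intro nn_integral_eq_integral integrable_bounded01[OF P, where B=1] AE_I2) auto
  finally show ?thesis .
qed



lemma T_comp:
  fixes T :: "(nat \<Rightarrow> real) \<Rightarrow> (nat \<Rightarrow> real) \<Rightarrow> (nat \<Rightarrow> 'g::euclidean_space) \<Rightarrow> (nat \<Rightarrow> 'h::euclidean_space) \<Rightarrow> real"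
  assumes T_meas: "(\<lambda>(y, a, u, v). T y a u v) \<in> borel_measurable
       (vec_space n borel \<Otimes>\<^sub>M vec_space n borel \<Otimes>\<^sub>M vec_space n borel \<Otimes>\<^sub>M vec_space n borel)"
    and fy: "fy \<in> N \<rightarrow>\<^sub>M vec_space n borel" and fa: "fa \<in> N \<rightarrow>\<^sub>M vec_space n borel"
    and fu: "fu \<in> N \<rightarrow>\<^sub>M vec_space n borel" and fv: "fv \<in> N \<rightarrow>\<^sub>M vec_space n borel"
  shows "(\<lambda>w. T (fy w) (fa w) (fu w) (fv w)) \<in> borel_measurable N"
  using measurable_compose[OF measurable_Pair[OF fy measurable_Pair[OF fa measurable_Pair[OF fu fv]]] T_meas]
  by simp

lemma fst_borel[measurable]: "fst \<in> borel_measurable (borel :: ('a::topological_space \<times> 'b::topological_space) measure)"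
  by (intro borel_measurable_continuous_onI continuous_on_fst continuous_on_id)
lemma snd_borel[measurable]: "snd \<in> borel_measurable (borel :: ('a::topological_space \<times> 'b::topological_space) measure)"
  by (intro borel_measurable_continuous_onI continuous_on_snd continuous_on_id)

lemma Phi_meas:
  fixes T :: "(nat \<Rightarrow> real) \<Rightarrow> (nat \<Rightarrow> real) \<Rightarrow> (nat \<Rightarrow> 'g::euclidean_space) \<Rightarrow> (nat \<Rightarrow> 'h::euclidean_space) \<Rightarrow> real"
    and rho :: "'g \<times> 'h \<Rightarrow> real measure"
  assumes T_meas: "(\<lambda>(y, a, u, v). T y a u v) \<in> borel_measurable
       (vec_space n borel \<Otimes>\<^sub>M vec_space n borel \<Otimes>\<^sub>M vec_space n borel \<Otimes>\<^sub>M vec_space n borel)"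
    and rho: "rho \<in> borel \<rightarrow>\<^sub>M prob_algebra borel"
  shows "(\<lambda>((u, x), y). \<integral>\<^sup>+d. indicator {d. p_maxway M T y x (\<lambda>i\<in>{..<n}. fst (u i)) (\<lambda>i\<in>{..<n}. snd (u i)) d \<le> \<alpha>} d
            \<partial>PiM {..<M} (\<lambda>_. PiM {..<n} (\<lambda>i. rho (u i))))
    \<in> borel_measurable ((PiM {..<n} (\<lambda>_. borel) \<Otimes>\<^sub>M vec_space n borel) \<Otimes>\<^sub>M vec_space n borel)"
proof -
  define I where "I = {..<n}"
  define U where "U = PiM I (\<lambda>_. (borel :: ('g \<times> 'h) measure))"
  define V where "V = vec_space n (borel :: real measure)"
  define DD where "DD = PiM {..<M} (\<lambda>_. V)"
  define W where "W = (U \<Otimes>\<^sub>M V) \<Otimes>\<^sub>M V"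
  have VI: "V = PiM I (\<lambda>_. borel)" unfolding V_def vec_space_def I_def ..
  have Rk: "(\<lambda>u. PiM I (\<lambda>i. rho (u i))) \<in> U \<rightarrow>\<^sub>M prob_algebra V"
    unfolding U_def VI by (rule measurable_PiM_kernel) (auto simp: I_def intro!: measurable_compose[OF _ rho])
  have Dk: "(\<lambda>u. PiM {..<M} (\<lambda>_. PiM I (\<lambda>i. rho (u i)))) \<in> U \<rightarrow>\<^sub>M prob_algebra DD"
    unfolding DD_def by (rule measurable_PiM_kernel) (auto intro: Rk)
  have Lk: "(\<lambda>((u, x), y). PiM {..<M} (\<lambda>_. PiM I (\<lambda>i. rho (u i)))) \<in> W \<rightarrow>\<^sub>M subprob_algebra DD"
    unfolding W_def
    using measurable_compose[OF measurable_compose[OF measurable_fst measurable_fst] measurable_prob_algebraD[OF Dk]]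
    by (simp add: case_prod_beta')
  have gZ: "(\<lambda>w. \<lambda>i\<in>I. fst (fst (fst (fst w)) i)) \<in> W \<Otimes>\<^sub>M DD \<rightarrow>\<^sub>M vec_space n borel"
    unfolding W_def U_def vec_space_def I_def by measurable
  have hZ: "(\<lambda>w. \<lambda>i\<in>I. snd (fst (fst (fst w)) i)) \<in> W \<Otimes>\<^sub>M DD \<rightarrow>\<^sub>M vec_space n borel"
    unfolding W_def U_def vec_space_def I_def by measurable
  have ym: "(\<lambda>w. snd (fst w)) \<in> W \<Otimes>\<^sub>M DD \<rightarrow>\<^sub>M vec_space n borel"
    unfolding W_def V_def by measurable
  have xm: "(\<lambda>w. snd (fst (fst w))) \<in> W \<Otimes>\<^sub>M DD \<rightarrow>\<^sub>M vec_space n borel"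
    unfolding W_def V_def by measurable
  have dm: "(\<lambda>w. snd w m) \<in> W \<Otimes>\<^sub>M DD \<rightarrow>\<^sub>M vec_space n borel" if "m \<in> {..<M}" for m
    unfolding DD_def V_def using that by measurable
  have T0: "(\<lambda>w. T (snd (fst w)) (snd (fst (fst w))) (\<lambda>i\<in>I. fst (fst (fst (fst w)) i)) (\<lambda>i\<in>I. snd (fst (fst (fst w)) i)))
      \<in> borel_measurable (W \<Otimes>\<^sub>M DD)"
    by (rule T_comp[OF T_meas ym xm gZ hZ])
  have Tm: "(\<lambda>w. T (snd (fst w)) (snd w m) (\<lambda>i\<in>I. fst (fst (fst (fst w)) i)) (\<lambda>i\<in>I. snd (fst (fst (fst w)) i)))
      \<in> borel_measurable (W \<Otimes>\<^sub>M DD)" if "m \<in> {..<M}" for m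
    by (rule T_comp[OF T_meas ym dm[OF that] gZ hZ])
  define S where "S w = (\<Sum>m\<in>{..<M}. if T (snd (fst w)) (snd (fst (fst w))) (\<lambda>i\<in>I. fst (fst (fst (fst w)) i)) (\<lambda>i\<in>I. snd (fst (fst (fst w)) i))
      \<le> T (snd (fst w)) (snd w m) (\<lambda>i\<in>I. fst (fst (fst (fst w)) i)) (\<lambda>i\<in>I. snd (fst (fst (fst w)) i)) then 1 else 0::real)" for w
  have Sm: "S \<in> borel_measurable (W \<Otimes>\<^sub>M DD)"
    unfolding S_def
  proof (rule borel_measurable_sum)
    fix m assume m: "m \<in> {..<M}"
    show "(\<lambda>w. if T (snd (fst w)) (snd (fst (fst w))) (\<lambda>i\<in>I. fst (fst (fst (fst w)) i)) (\<lambda>i\<in>I. snd (fst (fst (fst w)) i))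
      \<le> T (snd (fst w)) (snd w m) (\<lambda>i\<in>I. fst (fst (fst (fst w)) i)) (\<lambda>i\<in>I. snd (fst (fst (fst w)) i)) then 1 else 0::real)
      \<in> borel_measurable (W \<Otimes>\<^sub>M DD)"
      using T0 Tm[OF m] by measurable
  qed
  have fm: "(\<lambda>w. if (1 + S w) / (real M + 1) \<le> \<alpha> then 1 else 0 :: ennreal) \<in> borel_measurable (W \<Otimes>\<^sub>M DD)"
    using Sm by measurable
  have feq: "indicator {d. p_maxway M T y x (\<lambda>i\<in>I. fst (u i)) (\<lambda>i\<in>I. snd (u i)) d \<le> \<alpha>} d
      = (if (1 + S (((u, x), y), d)) / (real M + 1) \<le> \<alpha> then 1 else 0 :: ennreal)" for u x y d
    unfolding p_maxway_def S_def card_as_sum[OF finite_lessThan] by (simp add: indicator_def)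
  have "(\<lambda>(((u, x), y), d). indicator {d. p_maxway M T y x (\<lambda>i\<in>I. fst (u i)) (\<lambda>i\<in>I. snd (u i)) d \<le> \<alpha>} d :: ennreal)
      \<in> borel_measurable (W \<Otimes>\<^sub>M DD)"
    using fm unfolding feq by (simp add: case_prod_beta')
  note indm = this
  from nn_integral_measurable_subprob_algebra2[OF _ Lk, of "\<lambda>((u, x), y) d. indicator {d. p_maxway M T y x (\<lambda>i\<in>I. fst (u i)) (\<lambda>i\<in>I. snd (u i)) d \<le> \<alpha>} d"]
  have "(\<lambda>w. \<integral>\<^sup>+d. (case w of ((u, x), y) \<Rightarrow> indicator {d. p_maxway M T y x (\<lambda>i\<in>I. fst (u i)) (\<lambda>i\<in>I. snd (u i)) d \<le> \<alpha>} d)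
        \<partial>(case w of ((u, x), y) \<Rightarrow> PiM {..<M} (\<lambda>_. PiM I (\<lambda>i. rho (u i))))) \<in> borel_measurable W"
    using indm by (simp add: case_prod_beta')
  then show ?thesis unfolding W_def U_def V_def I_def by (simp add: case_prod_beta')
qed



lemma combine:
  fixes a1 a2 a3 a4 D1 D2 :: "'z \<Rightarrow> real" and \<alpha> :: real
  assumes Z: "prob_space Z"
    and m: "a1 \<in> borel_measurable Z" "a2 \<in> borel_measurable Z" "a3 \<in> borel_measurable Z" "a4 \<in> borel_measurable Z"
    and b: "\<And>z. z \<in> space Z \<Longrightarrow> 0 \<le> a1 z \<and> 0 \<le> a2 z \<and> 0 \<le> a3 z \<and> 0 \<le> a4 z \<and> a4 z \<le> 1"
    and S1: "(\<integral>\<^sup>+z. ennreal (a3 z) \<partial>Z) = (\<integral>\<^sup>+z. ennreal (a4 z) \<partial>Z)"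
    and S2: "(\<integral>\<^sup>+z. ennreal (a2 z) \<partial>Z) = (\<integral>\<^sup>+z. ennreal (a4 z) \<partial>Z)"
    and S3: "\<And>z. z \<in> space Z \<Longrightarrow> a1 z + a4 z \<le> a2 z + a3 z + 2 * D1 z"
    and S4: "\<And>z. z \<in> space Z \<Longrightarrow> a4 z \<le> \<alpha> + D2 z"
    and D1: "\<And>z. 0 \<le> D1 z" and D2: "\<And>z. 0 \<le> D2 z" and \<alpha>: "0 \<le> \<alpha>"
  shows "(\<integral>\<^sup>+z. ennreal (a1 z) \<partial>Z) \<le> ennreal \<alpha> + 2 * (\<integral>\<^sup>+z. ennreal (D1 z) \<partial>Z) + (\<integral>\<^sup>+z. ennreal (D2 z) \<partial>Z)"
proof -
  interpret Z: prob_space Z by fact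
  define e where "e z = max 0 ((a1 z + a4 z - a2 z - a3 z) / 2)" for z
  define r where "r z = max 0 (a4 z - \<alpha>)" for z
  have em: "(\<lambda>z. ennreal (e z)) \<in> borel_measurable Z" unfolding e_def using m by measurable
  have rm: "(\<lambda>z. ennreal (r z)) \<in> borel_measurable Z" unfolding r_def using m by measurable
  have m': "(\<lambda>z. ennreal (a1 z)) \<in> borel_measurable Z" "(\<lambda>z. ennreal (a2 z)) \<in> borel_measurable Z"
    "(\<lambda>z. ennreal (a3 z)) \<in> borel_measurable Z" "(\<lambda>z. ennreal (a4 z)) \<in> borel_measurable Z"
    using m by measurable
  have p1: "ennreal (a1 z) + ennreal (a4 z) \<le> ennreal (a2 z) + ennreal (a3 z) + 2 * ennreal (e z)" if z: "z \<in> space Z" for z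
  proof -
    have "a1 z + a4 z \<le> a2 z + a3 z + 2 * e z" unfolding e_def by (auto simp: max_def field_simps)
    then have "ennreal (a1 z + a4 z) \<le> ennreal (a2 z + a3 z + 2 * e z)" by (rule ennreal_leI)
    moreover have "0 \<le> e z" by (simp add: e_def)
    moreover have "ennreal (a1 z + a4 z) = ennreal (a1 z) + ennreal (a4 z)"
      using b[OF z] by (intro ennreal_plus) auto
    moreover have "ennreal (a2 z + a3 z + 2 * e z) = ennreal (a2 z) + ennreal (a3 z) + 2 * ennreal (e z)"
      using b[OF z] \<open>0 \<le> e z\<close> by (simp add: ennreal_plus ennreal_mult)
    ultimately show ?thesis by simp
  qed
  have p2: "ennreal (e z) \<le> ennreal (D1 z)" if z: "z \<in> space Z" for z
    using S3[OF z] D1[of z] by (intro ennreal_leI) (auto simp: e_def)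
  have p3: "ennreal (a4 z) \<le> ennreal \<alpha> + ennreal (r z)" if z: "z \<in> space Z" for z
  proof -
    have "a4 z \<le> \<alpha> + r z" unfolding r_def by (auto simp: max_def)
    then have "ennreal (a4 z) \<le> ennreal (\<alpha> + r z)" by (rule ennreal_leI)
    then show ?thesis using \<alpha> by (simp add: ennreal_plus r_def)
  qed
  have p4: "ennreal (r z) \<le> ennreal (D2 z)" if z: "z \<in> space Z" for z
    using S4[OF z] D2[of z] by (intro ennreal_leI) (auto simp: r_def)
  define A4 where "A4 = (\<integral>\<^sup>+z. ennreal (a4 z) \<partial>Z)"
  have A4fin: "A4 \<noteq> \<infinity>"
  proof -
    have "A4 \<le> (\<integral>\<^sup>+z. 1 \<partial>Z)" unfolding A4_def using b by (intro nn_integral_mono) auto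
    then show ?thesis using Z.emeasure_space_1 by (auto simp: top_unique)
  qed
  have "(\<integral>\<^sup>+z. ennreal (a1 z) \<partial>Z) + A4 = (\<integral>\<^sup>+z. ennreal (a1 z) + ennreal (a4 z) \<partial>Z)"
    unfolding A4_def by (rule nn_integral_add[symmetric]) (use m' in auto)
  also have "\<dots> \<le> (\<integral>\<^sup>+z. ennreal (a2 z) + ennreal (a3 z) + 2 * ennreal (e z) \<partial>Z)"
    by (rule nn_integral_mono) (rule p1)
  also have "\<dots> = (\<integral>\<^sup>+z. ennreal (a2 z) \<partial>Z) + (\<integral>\<^sup>+z. ennreal (a3 z) \<partial>Z) + 2 * (\<integral>\<^sup>+z. ennreal (e z) \<partial>Z)"
    using m' em by (simp add: nn_integral_add nn_integral_cmult)
  also have "\<dots> = A4 + (A4 + 2 * (\<integral>\<^sup>+z. ennreal (e z) \<partial>Z))"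
    unfolding S1 S2 A4_def by (simp add: add.assoc)
  finally have "(\<integral>\<^sup>+z. ennreal (a1 z) \<partial>Z) \<le> A4 + 2 * (\<integral>\<^sup>+z. ennreal (e z) \<partial>Z)"
    using A4fin by (simp add: add.commute ennreal_add_left_cancel_le)
  note c1 = this
  have "A4 \<le> (\<integral>\<^sup>+z. ennreal \<alpha> + ennreal (r z) \<partial>Z)"
    unfolding A4_def by (rule nn_integral_mono) (rule p3)
  also have "\<dots> = ennreal \<alpha> + (\<integral>\<^sup>+z. ennreal (r z) \<partial>Z)"
    using rm by (simp add: nn_integral_add Z.emeasure_space_1)
  finally have c2: "A4 \<le> ennreal \<alpha> + (\<integral>\<^sup>+z. ennreal (r z) \<partial>Z)" .
  have c3: "(\<integral>\<^sup>+z. ennreal (r z) \<partial>Z) \<le> (\<integral>\<^sup>+z. ennreal (D2 z) \<partial>Z)"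
    by (rule nn_integral_mono) (rule p4)
  have c4: "(\<integral>\<^sup>+z. ennreal (e z) \<partial>Z) \<le> (\<integral>\<^sup>+z. ennreal (D1 z) \<partial>Z)"
    by (rule nn_integral_mono) (rule p2)
  have "A4 + 2 * (\<integral>\<^sup>+z. ennreal (e z) \<partial>Z) \<le> (ennreal \<alpha> + (\<integral>\<^sup>+z. ennreal (D2 z) \<partial>Z)) + 2 * (\<integral>\<^sup>+z. ennreal (D1 z) \<partial>Z)"
    using c2 c3 c4 by (intro add_mono mult_left_mono) (auto intro: order.trans add_mono)
  with c1 have "(\<integral>\<^sup>+z. ennreal (a1 z) \<partial>Z) \<le> (ennreal \<alpha> + (\<integral>\<^sup>+z. ennreal (D2 z) \<partial>Z)) + 2 * (\<integral>\<^sup>+z. ennreal (D1 z) \<partial>Z)"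
    by (rule order.trans)
  then show ?thesis by (simp add: ac_simps)
qed



lemma fub_gen:
  fixes f :: "'a \<Rightarrow> 'b \<Rightarrow> ennreal"
  assumes P: "prob_space P" and Q: "prob_space Q" and sP: "sets P = sets X" and sQ: "sets Q = sets Y"
    and f: "(\<lambda>(x, y). f x y) \<in> borel_measurable (X \<Otimes>\<^sub>M Y)"
  shows "(\<integral>\<^sup>+x. \<integral>\<^sup>+y. f x y \<partial>Q \<partial>P) = (\<integral>\<^sup>+y. \<integral>\<^sup>+x. f x y \<partial>P \<partial>Q)"
proof -
  interpret P: prob_space P by fact
  interpret Q: prob_space Q by fact
  interpret PQ: pair_sigma_finite P Q
    by (simp add: pair_sigma_finite_def P.sigma_finite_measure_axioms Q.sigma_finite_measure_axioms)
  have e: "sets (P \<Otimes>\<^sub>M Q) = sets (X \<Otimes>\<^sub>M Y)" by (rule sets_pair_measure_cong) (simp_all add: sP sQ)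
  have "(\<lambda>(x, y). f x y) \<in> borel_measurable (P \<Otimes>\<^sub>M Q)"
    by (subst measurable_cong_sets[OF e refl]) (rule f)
  then show ?thesis by (rule PQ.Fubini'[symmetric])
qed

lemma conv_gen:
  fixes \<phi> :: "'a \<Rightarrow> 'b \<Rightarrow> real"
  assumes P: "prob_space P" and Q: "prob_space Q" and sP: "sets P = sets X" and sQ: "sets Q = sets Y"
    and f: "(\<lambda>(x, y). \<phi> x y) \<in> borel_measurable (X \<Otimes>\<^sub>M Y)"
    and b: "\<And>x y. 0 \<le> \<phi> x y \<and> \<phi> x y \<le> 1"
  shows "(\<integral>\<^sup>+y. \<integral>\<^sup>+x. ennreal (\<phi> x y) \<partial>P \<partial>Q) = ennreal (\<integral>y. \<integral>x. \<phi> x y \<partial>P \<partial>Q)"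
proof (rule nn_real_iter[OF Q P])
  have e: "sets (Q \<Otimes>\<^sub>M P) = sets (Y \<Otimes>\<^sub>M X)" by (rule sets_pair_measure_cong) (simp_all add: sP sQ)
  have "(\<lambda>(y, x). \<phi> x y) \<in> borel_measurable (Y \<Otimes>\<^sub>M X)"
    using measurable_compose[OF measurable_pair_swap' f] by (simp add: case_prod_beta')
  then show "(\<lambda>(y, x). \<phi> x y) \<in> borel_measurable (Q \<Otimes>\<^sub>M P)"
    by (subst measurable_cong_sets[OF e refl])
qed (use b in auto)



lemma int01:
  fixes f :: "'a \<Rightarrow> real"
  assumes M: "prob_space M" and b: "\<And>x. 0 \<le> f x \<and> f x \<le> 1"
  shows "0 \<le> integral\<^sup>L M f \<and> integral\<^sup>L M f \<le> 1"
proof (cases "integrable M f")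
  case True
  interpret M: prob_space M by fact
  show ?thesis using b True by (auto intro!: integral_nonneg M.integral_le_const)
next
  case False then show ?thesis by (simp add: not_integrable_integral_eq)
qed

lemma int_le_const_gen:
  fixes f :: "'a \<Rightarrow> real"
  assumes M: "prob_space M" and b: "\<And>x. x \<in> space M \<Longrightarrow> f x \<le> c" and c: "0 \<le> c"
  shows "integral\<^sup>L M f \<le> c"
proof (cases "integrable M f")
  case True
  interpret M: prob_space M by fact
  show ?thesis using b True by (auto intro!: M.integral_le_const AE_I2)
next
  case False then show ?thesis using c by (simp add: not_integrable_integral_eq)
qed

lemma pk_gen:
  fixes K :: "'c::topological_space \<Rightarrow> 'd measure"
  assumes K: "K \<in> borel \<rightarrow>\<^sub>M prob_algebra N"
  shows "prob_space (K w) \<and> sets (K w) = sets N"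
  using measurable_space[OF K, of w] by (simp add: space_prob_algebra)

lemma pv_gen:
  fixes K :: "'c::topological_space \<Rightarrow> real measure"
  assumes K: "K \<in> borel \<rightarrow>\<^sub>M prob_algebra borel"
  shows "prob_space (PiM I (\<lambda>i. K (w i))) \<and> sets (PiM I (\<lambda>i. K (w i))) = sets (PiM I (\<lambda>_. borel))"
proof
  show "prob_space (PiM I (\<lambda>i. K (w i)))" by (rule prob_space_PiM) (use pk_gen[OF K] in blast)
  show "sets (PiM I (\<lambda>i. K (w i))) = sets (PiM I (\<lambda>_. borel))" by (rule sets_PiM_cong) (use pk_gen[OF K] in auto)
qed

theorem theorem2:
  fixes n M :: nat and \<alpha> :: real
    and \<mu> :: "(real ^ 'p) measure"
    and kx ky :: "real ^ 'p \<Rightarrow> real measure"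
    and g :: "real ^ 'p \<Rightarrow> 'g::euclidean_space"
    and h :: "real ^ 'p \<Rightarrow> 'h::euclidean_space"
    and rho_star rho fy_gh :: "'g \<times> 'h \<Rightarrow> real measure"
    and T :: "(nat \<Rightarrow> real) \<Rightarrow> (nat \<Rightarrow> real) \<Rightarrow> (nat \<Rightarrow> 'g) \<Rightarrow> (nat \<Rightarrow> 'h) \<Rightarrow> real"
  assumes mu: "prob_space \<mu>" "sets \<mu> = sets borel"
    and kx: "kx \<in> borel \<rightarrow>\<^sub>M prob_algebra borel"
    and ky: "ky \<in> borel \<rightarrow>\<^sub>M prob_algebra borel"
    and g: "g \<in> borel_measurable borel" and h: "h \<in> borel_measurable borel"
    and rho_star: "rho_star \<in> borel \<rightarrow>\<^sub>M prob_algebra borel"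
    and rho: "rho \<in> borel \<rightarrow>\<^sub>M prob_algebra borel"
    and fy_gh: "fy_gh \<in> borel \<rightarrow>\<^sub>M prob_algebra borel"
    and rho_star_cond: "\<And>A B. A \<in> sets borel \<Longrightarrow> B \<in> sets borel \<Longrightarrow>
       (\<integral>\<^sup>+ z. indicator B (g z, h z) * emeasure (kx z) A \<partial>\<mu>)
         = (\<integral>\<^sup>+ z. indicator B (g z, h z) * emeasure (rho_star (g z, h z)) A \<partial>\<mu>)"
    and fy_gh_cond: "\<And>A B. A \<in> sets borel \<Longrightarrow> B \<in> sets borel \<Longrightarrow>
       (\<integral>\<^sup>+ z. indicator B (g z, h z) * emeasure (ky z) A \<partial>\<mu>)
         = (\<integral>\<^sup>+ z. indicator B (g z, h z) * emeasure (fy_gh (g z, h z)) A \<partial>\<mu>)"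
    and T_meas: "(\<lambda>(y, a, u, v). T y a u v) \<in> borel_measurable
       (vec_space n borel \<Otimes>\<^sub>M vec_space n borel \<Otimes>\<^sub>M vec_space n borel \<Otimes>\<^sub>M vec_space n borel)"
    and cont_star: "AE zs in vec_space n \<mu>. AE y in vec_law n ky zs.
       atomless (distr (vec_law n (\<lambda>z. rho_star (g z, h z)) zs) borel
                   (\<lambda>a. T y a (vmap n g zs) (vmap n h zs)))"
    and cont_xZ: "AE zs in vec_space n \<mu>. AE y in vec_law n ky zs.
       atomless (distr (vec_law n kx zs) borel (\<lambda>a. T y a (vmap n g zs) (vmap n h zs)))"
    and M: "M \<ge> 1" and alpha: "0 < \<alpha>" "\<alpha> < 1"
  shows
   "(\<integral>\<^sup>+ zs. \<integral>\<^sup>+ x. \<integral>\<^sup>+ y. \<integral>\<^sup>+ draws.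
        indicator {d. p_maxway M T y x (vmap n g zs) (vmap n h zs) d \<le> \<alpha>} draws
      \<partial>(PiM {..<M} (\<lambda>_. vec_law n (\<lambda>z. rho (g z, h z)) zs))
      \<partial>(vec_law n ky zs) \<partial>(vec_law n kx zs) \<partial>(vec_space n \<mu>))
    \<le> ennreal \<alpha>
      + 2 * (\<integral>\<^sup>+ zs. ennreal (dTV (vec_law n (\<lambda>z. rho_star (g z, h z)) zs) (vec_law n kx zs)
                        * dTV (vec_law n ky zs) (vec_law n (\<lambda>z. fy_gh (g z, h z)) zs)) \<partial>(vec_space n \<mu>))
      + (\<integral>\<^sup>+ zs. ennreal (dTV (vec_law n (\<lambda>z. rho_star (g z, h z)) zs)
                              (vec_law n (\<lambda>z. rho (g z, h z)) zs)) \<partial>(vec_space n \<mu>))"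
proof -
  interpret mu: prob_space \<mu> by (rule mu(1))
  define I where "I = {..<n}"
  have fin: "finite I" by (simp add: I_def)
  define U where "U = PiM I (\<lambda>_. (borel :: ('g \<times> 'h) measure))"
  define V where "V = vec_space n (borel :: real measure)"
  define Z where "Z = vec_space n \<mu>"
  have VI: "V = PiM I (\<lambda>_. borel)" by (simp add: V_def vec_space_def I_def)
  have ZI: "Z = PiM I (\<lambda>_. \<mu>)" by (simp add: Z_def vec_space_def I_def)
  define gh where "gh z = (g z, h z)" for z
  define uz where "uz zs = (\<lambda>i\<in>I. gh (zs i))" for zs
  define R where "R u = PiM I (\<lambda>i. rho (u i))" for u :: "nat \<Rightarrow> 'g \<times> 'h"
  define RS where "RS u = PiM I (\<lambda>i. rho_star (u i))" for u :: "nat \<Rightarrow> 'g \<times> 'h"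
  define FY where "FY u = PiM I (\<lambda>i. fy_gh (u i))" for u :: "nat \<Rightarrow> 'g \<times> 'h"
  define KX where "KX zs = PiM I (\<lambda>i. kx (zs i))" for zs
  define KY where "KY zs = PiM I (\<lambda>i. ky (zs i))" for zs
  define \<Phi> where "\<Phi> u x y = (\<integral>\<^sup>+d. indicator {d. p_maxway M T y x (\<lambda>i\<in>I. fst (u i)) (\<lambda>i\<in>I. snd (u i)) d \<le> \<alpha>} d
      \<partial>PiM {..<M} (\<lambda>_. R u))" for u x y
  define \<phi> where "\<phi> u x y = enn2real (\<Phi> u x y)" for u x y
  define II where "II u P Q = (\<integral>y. \<integral>x. \<phi> u x y \<partial>P \<partial>Q)" for u P Q
  have smu: "sets \<mu> = sets borel" by (rule mu(2))
  note pv = pv_gen[where I=I, folded VI]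
  have pR: "prob_space (R u)" "sets (R u) = sets V" for u using pv[OF rho] by (auto simp: R_def)
  have pRS: "prob_space (RS u)" "sets (RS u) = sets V" for u using pv[OF rho_star] by (auto simp: RS_def)
  have pFY: "prob_space (FY u)" "sets (FY u) = sets V" for u using pv[OF fy_gh] by (auto simp: FY_def)
  have pKX: "prob_space (KX zs)" "sets (KX zs) = sets V" for zs using pv[OF kx] by (auto simp: KX_def)
  have pKY: "prob_space (KY zs)" "sets (KY zs) = sets V" for zs using pv[OF ky] by (auto simp: KY_def)
  have smu: "sets \<mu> = sets borel" by (rule mu(2))
  have spmu: "space \<mu> = UNIV" using sets_eq_imp_space_eq[OF smu] by simp
  have kx': "kx \<in> \<mu> \<rightarrow>\<^sub>M prob_algebra borel" using kx measurable_cong_sets[OF smu refl] by blast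
  have ky': "ky \<in> \<mu> \<rightarrow>\<^sub>M prob_algebra borel" using ky measurable_cong_sets[OF smu refl] by blast
  have g': "g \<in> borel_measurable \<mu>" using g measurable_cong_sets[OF smu refl] by blast
  have h': "h \<in> borel_measurable \<mu>" using h measurable_cong_sets[OF smu refl] by blast
  have ghm: "gh \<in> \<mu> \<rightarrow>\<^sub>M (borel :: ('g \<times> 'h) measure)"
    unfolding gh_def using g' h' by (rule borel_measurable_Pair)
  have uzm: "uz \<in> Z \<rightarrow>\<^sub>M U"
    unfolding uz_def ZI U_def using ghm by measurable
  have Rk: "R \<in> U \<rightarrow>\<^sub>M prob_algebra V"
    unfolding R_def U_def VI by (rule measurable_PiM_kernel[OF fin]) (intro measurable_compose[OF _ rho] measurable_component_singleton)
  have RSk: "RS \<in> U \<rightarrow>\<^sub>M prob_algebra V"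
    unfolding RS_def U_def VI by (rule measurable_PiM_kernel[OF fin]) (intro measurable_compose[OF _ rho_star] measurable_component_singleton)
  have FYk: "FY \<in> U \<rightarrow>\<^sub>M prob_algebra V"
    unfolding FY_def U_def VI by (rule measurable_PiM_kernel[OF fin]) (intro measurable_compose[OF _ fy_gh] measurable_component_singleton)
  have KXk: "KX \<in> Z \<rightarrow>\<^sub>M prob_algebra V"
    unfolding KX_def ZI VI by (rule measurable_PiM_kernel[OF fin]) (intro measurable_compose[OF _ kx'] measurable_component_singleton)
  have KYk: "KY \<in> Z \<rightarrow>\<^sub>M prob_algebra V"
    unfolding KY_def ZI VI by (rule measurable_PiM_kernel[OF fin]) (intro measurable_compose[OF _ ky'] measurable_component_singleton)
  have \<Phi>m: "(\<lambda>((u, x), y). \<Phi> u x y) \<in> borel_measurable ((U \<Otimes>\<^sub>M V) \<Otimes>\<^sub>M V)"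
    using Phi_meas[OF T_meas rho, of M \<alpha>] unfolding \<Phi>_def R_def U_def V_def I_def by simp
  have pD: "prob_space (PiM {..<M} (\<lambda>_. R u))" for u by (rule prob_space_PiM) (rule pR)
  have \<Phi>1: "\<Phi> u x y \<le> 1" for u x y
  proof -
    interpret D: prob_space "PiM {..<M} (\<lambda>_. R u)" by (rule pD)
    have "\<Phi> u x y \<le> (\<integral>\<^sup>+d. 1 \<partial>PiM {..<M} (\<lambda>_. R u))" unfolding \<Phi>_def
      by (intro nn_integral_mono) (simp add: indicator_def)
    then show ?thesis by (simp add: D.emeasure_space_1)
  qed
  have \<Phi>eq: "\<Phi> u x y = ennreal (\<phi> u x y)" for u x y
  proof -
    have "\<Phi> u x y \<noteq> \<top>" using le_less_trans[OF \<Phi>1[of u x y] ennreal_one_less_top] by simp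
    then show ?thesis unfolding \<phi>_def ennreal_enn2real_if by simp
  qed
  have \<phi>b: "0 \<le> \<phi> u x y \<and> \<phi> u x y \<le> 1" for u x y
    using \<Phi>1[of u x y] unfolding \<phi>_def by (auto simp: enn2real_leI)
  have \<phi>m: "(\<lambda>((u, x), y). \<phi> u x y) \<in> borel_measurable ((U \<Otimes>\<^sub>M V) \<Otimes>\<^sub>M V)"
    unfolding \<phi>_def using borel_measurable_enn2real[OF \<Phi>m] by (simp add: case_prod_beta')
  have uzs: "uz zs \<in> space U" for zs by (simp add: uz_def U_def space_PiM)
  have secm: "(\<lambda>(x, y). ((u, x), y)) \<in> V \<Otimes>\<^sub>M V \<rightarrow>\<^sub>M (U \<Otimes>\<^sub>M V) \<Otimes>\<^sub>M V" if u: "u \<in> space U" for u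
    using u by measurable
  have sec\<Phi>: "(\<lambda>(x, y). \<Phi> u x y) \<in> borel_measurable (V \<Otimes>\<^sub>M V)" if u: "u \<in> space U" for u
    using measurable_compose[OF secm[OF u] \<Phi>m] by (simp add: case_prod_beta')
  have sec\<phi>: "(\<lambda>(x, y). \<phi> u x y) \<in> borel_measurable (V \<Otimes>\<^sub>M V)" if u: "u \<in> space U" for u
    using measurable_compose[OF secm[OF u] \<phi>m] by (simp add: case_prod_beta')
  have fubU: "(\<integral>\<^sup>+x. \<integral>\<^sup>+y. \<Phi> u x y \<partial>Q \<partial>P) = (\<integral>\<^sup>+y. \<integral>\<^sup>+x. \<Phi> u x y \<partial>P \<partial>Q)"
    if "u \<in> space U" "prob_space P" "sets P = sets V" "prob_space Q" "sets Q = sets V" for u P Q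
    by (rule fub_gen[OF that(2,4,3,5) sec\<Phi>[OF that(1)]])
  have convU: "(\<integral>\<^sup>+y. \<integral>\<^sup>+x. \<Phi> u x y \<partial>P \<partial>Q) = ennreal (II u P Q)"
    if "u \<in> space U" "prob_space P" "sets P = sets V" "prob_space Q" "sets Q = sets V" for u P Q
    unfolding \<Phi>eq II_def by (rule conv_gen[OF that(2,4,3,5) sec\<phi>[OF that(1)] \<phi>b])
  have IIb: "0 \<le> II u P Q \<and> II u P Q \<le> 1" if "prob_space P" "prob_space Q" for u P Q
    unfolding II_def by (rule int01[OF that(2)]) (rule int01[OF that(1) \<phi>b])
  define a1 where "a1 zs = II (uz zs) (KX zs) (KY zs)" for zs
  define a2 where "a2 zs = II (uz zs) (RS (uz zs)) (KY zs)" for zs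
  define a3 where "a3 zs = II (uz zs) (KX zs) (FY (uz zs))" for zs
  define a4 where "a4 zs = II (uz zs) (RS (uz zs)) (FY (uz zs))" for zs
  define D1 where "D1 zs = dTV (RS (uz zs)) (KX zs) * dTV (KY zs) (FY (uz zs))" for zs
  define D2 where "D2 zs = dTV (RS (uz zs)) (R (uz zs))" for zs
  have eKX: "vec_law n kx zs = KX zs" for zs by (simp add: vec_law_def KX_def I_def)
  have eKY: "vec_law n ky zs = KY zs" for zs by (simp add: vec_law_def KY_def I_def)
  have eR: "vec_law n (\<lambda>z. rho (g z, h z)) zs = R (uz zs)" for zs
    unfolding vec_law_def R_def by (rule PiM_cong) (simp_all add: I_def uz_def gh_def)
  have eRS: "vec_law n (\<lambda>z. rho_star (g z, h z)) zs = RS (uz zs)" for zs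
    unfolding vec_law_def RS_def by (rule PiM_cong) (simp_all add: I_def uz_def gh_def)
  have eFY: "vec_law n (\<lambda>z. fy_gh (g z, h z)) zs = FY (uz zs)" for zs
    unfolding vec_law_def FY_def by (rule PiM_cong) (simp_all add: I_def uz_def gh_def)
  have eg: "vmap n g zs = (\<lambda>i\<in>I. fst (uz zs i))" for zs
    by (auto simp: vmap_def uz_def gh_def I_def)
  have eh: "vmap n h zs = (\<lambda>i\<in>I. snd (uz zs i))" for zs
    by (auto simp: vmap_def uz_def gh_def I_def)
  have LHS: "(\<integral>\<^sup>+ zs. \<integral>\<^sup>+ x. \<integral>\<^sup>+ y. \<integral>\<^sup>+ draws.
        indicator {d. p_maxway M T y x (vmap n g zs) (vmap n h zs) d \<le> \<alpha>} draws
      \<partial>(PiM {..<M} (\<lambda>_. vec_law n (\<lambda>z. rho (g z, h z)) zs))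
      \<partial>(vec_law n ky zs) \<partial>(vec_law n kx zs) \<partial>(vec_space n \<mu>)) = (\<integral>\<^sup>+zs. ennreal (a1 zs) \<partial>Z)"
    unfolding Z_def[symmetric]
  proof (rule nn_integral_cong)
    fix zs
    have "(\<integral>\<^sup>+ x. \<integral>\<^sup>+ y. \<integral>\<^sup>+ draws.
        indicator {d. p_maxway M T y x (vmap n g zs) (vmap n h zs) d \<le> \<alpha>} draws
      \<partial>(PiM {..<M} (\<lambda>_. vec_law n (\<lambda>z. rho (g z, h z)) zs))
      \<partial>(vec_law n ky zs) \<partial>(vec_law n kx zs)) = (\<integral>\<^sup>+x. \<integral>\<^sup>+y. \<Phi> (uz zs) x y \<partial>KY zs \<partial>KX zs)"
      unfolding eKX eKY eR eg eh \<Phi>_def ..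
    also have "\<dots> = (\<integral>\<^sup>+y. \<integral>\<^sup>+x. \<Phi> (uz zs) x y \<partial>KX zs \<partial>KY zs)"
      by (rule fubU[OF uzs pKX pKY])
    also have "\<dots> = ennreal (a1 zs)" unfolding a1_def by (rule convU[OF uzs pKX pKY])
    finally show "(\<integral>\<^sup>+ x. \<integral>\<^sup>+ y. \<integral>\<^sup>+ draws.
        indicator {d. p_maxway M T y x (vmap n g zs) (vmap n h zs) d \<le> \<alpha>} draws
      \<partial>(PiM {..<M} (\<lambda>_. vec_law n (\<lambda>z. rho (g z, h z)) zs))
      \<partial>(vec_law n ky zs) \<partial>(vec_law n kx zs)) = ennreal (a1 zs)" .
  qed
  have RHS1: "(\<integral>\<^sup>+ zs. ennreal (dTV (vec_law n (\<lambda>z. rho_star (g z, h z)) zs) (vec_law n kx zs)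
                        * dTV (vec_law n ky zs) (vec_law n (\<lambda>z. fy_gh (g z, h z)) zs)) \<partial>(vec_space n \<mu>))
      = (\<integral>\<^sup>+zs. ennreal (D1 zs) \<partial>Z)"
    unfolding Z_def D1_def eRS eKX eKY eFY ..
  have RHS2: "(\<integral>\<^sup>+ zs. ennreal (dTV (vec_law n (\<lambda>z. rho_star (g z, h z)) zs)
                              (vec_law n (\<lambda>z. rho (g z, h z)) zs)) \<partial>(vec_space n \<mu>))
      = (\<integral>\<^sup>+zs. ennreal (D2 zs) \<partial>Z)"
    unfolding Z_def D2_def eRS eR ..
  have main: "(\<integral>\<^sup>+zs. ennreal (a1 zs) \<partial>Z) \<le> ennreal \<alpha> + 2 * (\<integral>\<^sup>+zs. ennreal (D1 zs) \<partial>Z) + (\<integral>\<^sup>+zs. ennreal (D2 zs) \<partial>Z)"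
  proof (rule combine)
    show pZ: "prob_space Z" unfolding ZI by (rule prob_space_PiM) (rule mu(1))
    have nnm: "(\<lambda>zs. \<integral>\<^sup>+y. \<integral>\<^sup>+x. \<Phi> (uz zs) x y \<partial>P zs \<partial>Q zs) \<in> borel_measurable Z"
      if P: "P \<in> Z \<rightarrow>\<^sub>M prob_algebra V" and Q: "Q \<in> Z \<rightarrow>\<^sub>M prob_algebra V" for P Q
    proof -
      have mp: "(\<lambda>w. ((uz (fst (fst w)), snd w), snd (fst w))) \<in> (Z \<Otimes>\<^sub>M V) \<Otimes>\<^sub>M V \<rightarrow>\<^sub>M (U \<Otimes>\<^sub>M V) \<Otimes>\<^sub>M V"
        using uzm by measurable
      have f1: "(\<lambda>((zs, y), x). \<Phi> (uz zs) x y) \<in> borel_measurable ((Z \<Otimes>\<^sub>M V) \<Otimes>\<^sub>M V)"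
        using measurable_compose[OF mp \<Phi>m] by (simp add: case_prod_beta')
      have L1: "(\<lambda>(zs, y). P zs) \<in> Z \<Otimes>\<^sub>M V \<rightarrow>\<^sub>M subprob_algebra V"
        using measurable_compose[OF measurable_fst measurable_prob_algebraD[OF P]] by (simp add: case_prod_beta')
      have "(\<lambda>w. integral\<^sup>N ((\<lambda>(zs, y). P zs) w) ((\<lambda>(zs, y) x. \<Phi> (uz zs) x y) w)) \<in> borel_measurable (Z \<Otimes>\<^sub>M V)"
        by (rule nn_integral_measurable_subprob_algebra2[OF _ L1]) (use f1 in \<open>simp add: case_prod_beta'\<close>)
      then have f2: "(\<lambda>(zs, y). \<integral>\<^sup>+x. \<Phi> (uz zs) x y \<partial>P zs) \<in> borel_measurable (Z \<Otimes>\<^sub>M V)"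
        by (simp add: case_prod_beta')
      show ?thesis
        by (rule nn_integral_measurable_subprob_algebra2[OF f2 measurable_prob_algebraD[OF Q]])
    qed
    have RSuz: "(\<lambda>zs. RS (uz zs)) \<in> Z \<rightarrow>\<^sub>M prob_algebra V" by (rule measurable_compose[OF uzm RSk])
    have FYuz: "(\<lambda>zs. FY (uz zs)) \<in> Z \<rightarrow>\<^sub>M prob_algebra V" by (rule measurable_compose[OF uzm FYk])
    have am: "(\<lambda>zs. II (uz zs) (P zs) (Q zs)) \<in> borel_measurable Z"
      if P: "P \<in> Z \<rightarrow>\<^sub>M prob_algebra V" and Q: "Q \<in> Z \<rightarrow>\<^sub>M prob_algebra V"
        and pP: "\<And>zs. prob_space (P zs) \<and> sets (P zs) = sets V" and pQ: "\<And>zs. prob_space (Q zs) \<and> sets (Q zs) = sets V" for P Q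
    proof -
      have "II (uz zs) (P zs) (Q zs) = enn2real (\<integral>\<^sup>+y. \<integral>\<^sup>+x. \<Phi> (uz zs) x y \<partial>P zs \<partial>Q zs)" for zs
        using convU[OF uzs, of "P zs" "Q zs"] pP[of zs] pQ[of zs] IIb[of "P zs" "Q zs" "uz zs"] by simp
      then show ?thesis using borel_measurable_enn2real[OF nnm[OF P Q]] by simp
    qed
    show "a1 \<in> borel_measurable Z" unfolding a1_def by (rule am[OF KXk KYk]) (simp_all add: pKX pKY)
    show "a2 \<in> borel_measurable Z" unfolding a2_def by (rule am[OF RSuz KYk]) (simp_all add: pRS pKY)
    show "a3 \<in> borel_measurable Z" unfolding a3_def by (rule am[OF KXk FYuz]) (simp_all add: pKX pFY)
    show "a4 \<in> borel_measurable Z" unfolding a4_def by (rule am[OF RSuz FYuz]) (simp_all add: pRS pFY)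
    show "0 \<le> a1 z \<and> 0 \<le> a2 z \<and> 0 \<le> a3 z \<and> 0 \<le> a4 z \<and> a4 z \<le> 1" for z
      unfolding a1_def a2_def a3_def a4_def using IIb pKX pKY pRS pFY by blast
    show S1: "(\<integral>\<^sup>+z. ennreal (a3 z) \<partial>Z) = (\<integral>\<^sup>+z. ennreal (a4 z) \<partial>Z)"
    proof -
      define F where "F u x = (\<integral>\<^sup>+y. \<Phi> u x y \<partial>FY u)" for u x
      have L: "(\<lambda>(u, x). FY u) \<in> U \<Otimes>\<^sub>M V \<rightarrow>\<^sub>M subprob_algebra V"
        using measurable_compose[OF measurable_fst measurable_prob_algebraD[OF FYk]] by (simp add: case_prod_beta')
      have "(\<lambda>w. integral\<^sup>N ((\<lambda>(u, x). FY u) w) ((\<lambda>(u, x) y. \<Phi> u x y) w)) \<in> borel_measurable (U \<Otimes>\<^sub>M V)"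
        by (rule nn_integral_measurable_subprob_algebra2[OF _ L]) (use \<Phi>m in \<open>simp add: case_prod_beta'\<close>)
      then have Fm: "(\<lambda>(u, x). F u x) \<in> borel_measurable (PiM I (\<lambda>_. borel) \<Otimes>\<^sub>M PiM I (\<lambda>_. borel))"
        unfolding F_def U_def VI by (simp add: case_prod_beta')
      have cond: "(\<integral>\<^sup>+z. indicator B (gh z) * emeasure (kx z) A \<partial>\<mu>) = (\<integral>\<^sup>+z. indicator B (gh z) * emeasure (rho_star (gh z)) A \<partial>\<mu>)"
        if "A \<in> sets borel" "B \<in> sets borel" for A B
        unfolding gh_def by (rule rho_star_cond[OF that])
      have K2: "(\<lambda>z. rho_star (gh z)) \<in> \<mu> \<rightarrow>\<^sub>M prob_algebra borel" by (rule measurable_compose[OF ghm rho_star])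
      have av: "(\<integral>\<^sup>+zs. \<integral>\<^sup>+x. F (\<lambda>i\<in>I. gh (zs i)) x \<partial>PiM I (\<lambda>i. kx (zs i)) \<partial>PiM I (\<lambda>_. \<mu>))
          = (\<integral>\<^sup>+zs. \<integral>\<^sup>+x. F (\<lambda>i\<in>I. gh (zs i)) x \<partial>PiM I (\<lambda>i. rho_star (gh (zs i))) \<partial>PiM I (\<lambda>_. \<mu>))"
        by (rule avg[OF mu(1) kx' K2 ghm cond fin Fm])
      have l: "ennreal (a3 zs) = (\<integral>\<^sup>+x. F (\<lambda>i\<in>I. gh (zs i)) x \<partial>PiM I (\<lambda>i. kx (zs i)))" for zs
        unfolding a3_def F_def convU[OF uzs pKX pFY, symmetric] fubU[OF uzs pKX pFY, symmetric]
        by (simp add: uz_def KX_def)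
      have eRS': "RS (uz zs) = PiM I (\<lambda>i. rho_star (gh (zs i)))" for zs
        unfolding RS_def by (rule PiM_cong) (simp_all add: uz_def)
      have r: "ennreal (a4 zs) = (\<integral>\<^sup>+x. F (\<lambda>i\<in>I. gh (zs i)) x \<partial>PiM I (\<lambda>i. rho_star (gh (zs i))))" for zs
        unfolding a4_def F_def convU[OF uzs pRS pFY, symmetric] fubU[OF uzs pRS pFY, symmetric] eRS'[symmetric]
        by (simp add: uz_def)
      show ?thesis unfolding l r ZI by (rule av)
    qed
    show S2: "(\<integral>\<^sup>+z. ennreal (a2 z) \<partial>Z) = (\<integral>\<^sup>+z. ennreal (a4 z) \<partial>Z)"
    proof -
      define F where "F u y = (\<integral>\<^sup>+x. \<Phi> u x y \<partial>RS u)" for u y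
      have L: "(\<lambda>(u, y). RS u) \<in> U \<Otimes>\<^sub>M V \<rightarrow>\<^sub>M subprob_algebra V"
        using measurable_compose[OF measurable_fst measurable_prob_algebraD[OF RSk]] by (simp add: case_prod_beta')
      have mp: "(\<lambda>w. ((fst (fst w), snd w), snd (fst w))) \<in> (U \<Otimes>\<^sub>M V) \<Otimes>\<^sub>M V \<rightarrow>\<^sub>M (U \<Otimes>\<^sub>M V) \<Otimes>\<^sub>M V"
        by measurable
      have f1: "(\<lambda>((u, y), x). \<Phi> u x y) \<in> borel_measurable ((U \<Otimes>\<^sub>M V) \<Otimes>\<^sub>M V)"
        using measurable_compose[OF mp \<Phi>m] by (simp add: case_prod_beta')
      have "(\<lambda>w. integral\<^sup>N ((\<lambda>(u, y). RS u) w) ((\<lambda>(u, y) x. \<Phi> u x y) w)) \<in> borel_measurable (U \<Otimes>\<^sub>M V)"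
        by (rule nn_integral_measurable_subprob_algebra2[OF _ L]) (use f1 in \<open>simp add: case_prod_beta'\<close>)
      then have Fm: "(\<lambda>(u, y). F u y) \<in> borel_measurable (PiM I (\<lambda>_. borel) \<Otimes>\<^sub>M PiM I (\<lambda>_. borel))"
        unfolding F_def U_def VI by (simp add: case_prod_beta')
      have cond: "(\<integral>\<^sup>+z. indicator B (gh z) * emeasure (ky z) A \<partial>\<mu>) = (\<integral>\<^sup>+z. indicator B (gh z) * emeasure (fy_gh (gh z)) A \<partial>\<mu>)"
        if "A \<in> sets borel" "B \<in> sets borel" for A B
        unfolding gh_def by (rule fy_gh_cond[OF that])
      have K2: "(\<lambda>z. fy_gh (gh z)) \<in> \<mu> \<rightarrow>\<^sub>M prob_algebra borel" by (rule measurable_compose[OF ghm fy_gh])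
      have av: "(\<integral>\<^sup>+zs. \<integral>\<^sup>+y. F (\<lambda>i\<in>I. gh (zs i)) y \<partial>PiM I (\<lambda>i. ky (zs i)) \<partial>PiM I (\<lambda>_. \<mu>))
          = (\<integral>\<^sup>+zs. \<integral>\<^sup>+y. F (\<lambda>i\<in>I. gh (zs i)) y \<partial>PiM I (\<lambda>i. fy_gh (gh (zs i))) \<partial>PiM I (\<lambda>_. \<mu>))"
        by (rule avg[OF mu(1) ky' K2 ghm cond fin Fm])
      have l: "ennreal (a2 zs) = (\<integral>\<^sup>+y. F (\<lambda>i\<in>I. gh (zs i)) y \<partial>PiM I (\<lambda>i. ky (zs i)))" for zs
        unfolding a2_def F_def convU[OF uzs pRS pKY, symmetric]
        by (simp add: uz_def KY_def)
      have eFY': "FY (uz zs) = PiM I (\<lambda>i. fy_gh (gh (zs i)))" for zs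
        unfolding FY_def by (rule PiM_cong) (simp_all add: uz_def)
      have r: "ennreal (a4 zs) = (\<integral>\<^sup>+y. F (\<lambda>i\<in>I. gh (zs i)) y \<partial>PiM I (\<lambda>i. fy_gh (gh (zs i))))" for zs
        unfolding a4_def F_def convU[OF uzs pRS pFY, symmetric] eFY'[symmetric]
        by (simp add: uz_def)
      show ?thesis unfolding l r ZI by (rule av)
    qed
    show "a1 z + a4 z \<le> a2 z + a3 z + 2 * D1 z" if "z \<in> space Z" for z
      unfolding a1_def a2_def a3_def a4_def D1_def II_def
      by (rule interaction[OF pKX(1)[of z] pRS(1)[of "uz z"] pKX(2)[of z] pRS(2)[of "uz z"]
            pKY(1)[of z] pFY(1)[of "uz z"] pKY(2)[of z] pFY(2)[of "uz z"] sec\<phi>[OF uzs[of z]] \<phi>b])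
    show "a4 z \<le> \<alpha> + D2 z" if z: "z \<in> space Z" for z
    proof -
      define u where "u = uz z"
      have u: "u \<in> space U" unfolding u_def by (rule uzs)
      have gy: "(\<integral>x. \<phi> u x y \<partial>RS u) \<le> \<alpha> + D2 z" if y: "y \<in> space V" for y
      proof -
        have sx: "(\<lambda>x. \<phi> u x y) \<in> borel_measurable V"
          using measurable_compose[OF measurable_Pair2'[OF y] sec\<phi>[OF u]] by simp
        have sxRS: "(\<lambda>x. \<phi> u x y) \<in> borel_measurable (RS u)"
          using sx measurable_cong_sets[OF pRS(2) refl] by blast
        have sxR: "(\<lambda>x. \<phi> u x y) \<in> borel_measurable (R u)"
          using sx measurable_cong_sets[OF pR(2) refl] by blast
        have tv: "\<bar>(\<integral>x. \<phi> u x y \<partial>RS u) - (\<integral>x. \<phi> u x y \<partial>R u)\<bar> \<le> (1 - 0) * dTV (RS u) (R u)"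
          by (rule tv_integral[OF pRS(1) pR(1)]) (simp_all add: pRS(2) pR(2) sxRS \<phi>b)
        define gZ where "gZ = (\<lambda>i\<in>I. fst (u i))"
        define hZ where "hZ = (\<lambda>i\<in>I. snd (u i))"
        define t where "t a = T y a gZ hZ" for a
        have yV: "y \<in> space (vec_space n borel)" using y by (simp add: V_def)
        have gZs: "gZ \<in> space (vec_space n borel)" by (simp add: gZ_def vec_space_def space_PiM I_def)
        have hZs: "hZ \<in> space (vec_space n borel)" by (simp add: hZ_def vec_space_def space_PiM I_def)
        have idm: "(\<lambda>a. a) \<in> R u \<rightarrow>\<^sub>M vec_space n borel"
          by (rule measurable_ident_sets) (simp add: pR(2) V_def)
        have tm: "t \<in> borel_measurable (R u)"
          unfolding t_def by (rule T_comp[OF T_meas measurable_const[OF yV] idm measurable_const[OF gZs] measurable_const[OF hZs]])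
        have dv: "c / (real M + 1) \<le> \<alpha> \<longleftrightarrow> c \<le> \<alpha> * (real M + 1)" for c :: real
          by (simp add: pos_divide_le_eq)
        have \<Phi>t: "\<Phi> u x y = (\<integral>\<^sup>+d. indicator {d. 1 + real (card {m\<in>{..<M}. t x \<le> t (d m)}) \<le> \<alpha> * (real M + 1)} d
            \<partial>PiM {..<M} (\<lambda>_. R u))" for x
          unfolding \<Phi>_def p_maxway_def t_def gZ_def hZ_def dv ..
        have "(\<integral>\<^sup>+x. \<Phi> u x y \<partial>R u) \<le> ennreal (\<alpha> * (real M + 1) / (real M + 1))"
          unfolding \<Phi>t by (rule exch[OF pR(1) tm]) (use alpha in simp)
        also have "\<alpha> * (real M + 1) / (real M + 1) = \<alpha>" by simp
        finally have e1: "(\<integral>\<^sup>+x. ennreal (\<phi> u x y) \<partial>R u) \<le> ennreal \<alpha>" unfolding \<Phi>eq .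
        have "(\<integral>\<^sup>+x. ennreal (\<phi> u x y) \<partial>R u) = ennreal (\<integral>x. \<phi> u x y \<partial>R u)"
          by (rule nn_integral_eq_integral) (use \<phi>b sxR in \<open>auto intro!: integrable_bounded01[OF pR(1), where B=1]\<close>)
        with e1 have ex: "(\<integral>x. \<phi> u x y \<partial>R u) \<le> \<alpha>" using alpha by simp
        show ?thesis using tv ex unfolding D2_def u_def[symmetric] by (simp add: abs_le_iff)
      qed
      have spFY: "space (FY u) = space V" by (rule sets_eq_imp_space_eq[OF pFY(2)])
      have "a4 z = (\<integral>y. (\<integral>x. \<phi> u x y \<partial>RS u) \<partial>FY u)" unfolding a4_def II_def u_def ..
      also have "\<dots> \<le> \<alpha> + D2 z"
        by (rule int_le_const_gen[OF pFY(1)]) (use gy spFY alpha dTV_nonneg[OF pRS(1) pR(1)] in \<open>auto simp: D2_def\<close>)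
      finally show ?thesis .
    qed
    show "0 \<le> D1 z" for z unfolding D1_def by (intro mult_nonneg_nonneg dTV_nonneg pKX pKY pRS pFY)
    show "0 \<le> D2 z" for z unfolding D2_def by (intro dTV_nonneg pR pRS)
    show "0 \<le> \<alpha>" using alpha by simp
  qed
  show ?thesis unfolding LHS RHS1 RHS2 by (rule main)
qed


end
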